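(* Let $E$ be an arbitrary graph, $X\subseteq{\rm Reg}(E)$, $Y={\rm Reg}(E)\setminus X$, and let $\alpha$ be a nonzero homogeneous element of $C_K^X(E)$ (with respect to its $\mathbb Z$-grading). Then there exist $\mu,\eta\in{\rm Path}(E)$ such that either $0\ne\mu^*\alpha\eta=ku$ for some $k\in K\setminus\{0\}$ and $u\in E^0$, or $0\neq\mu^*\alpha\eta=k\big(v-\sum_{e\in s^{-1}(v)}ee^*\big)$ for some $k\in K\setminus\{0\}$ and $v\in Y$. In particular, every nonzero graded ideal of $C_K^X(E)$ contains a vertex or an element of the form $v-\sum_{e\in s^{-1}(v)}ee^*$ with $v\in Y$.
   Context: Let $K$ be a field and $E=(E^0,E^1,r,s)$ a directed graph (no countability or finiteness assumptions). A vertex $v$ is regular if $s^{-1}(v)$ is finite and nonempty; ${\rm Reg}(E)$ is the set of regular vertices. A path of length $n\ge 1$ is a sequence $\xi_1\cdots\xi_n$ of edges with $r(\xi_i)=s(\xi_{i+1})$; vertices are paths of length $0$; ${\rm Path}(E)$ is the set of finite paths and $|\alpha|$ denotes length. For $X\subseteq{\rm Reg}(E)$, the relative Cohn path algebra $C_K^X(E)$ is the free $K$-algebra generated by $E^0\cup E^1\cup\{e^*:e\in E^1\}$ subject to: $vw=\delta_{v,w}v$; $s(e)e=er(e)=e$ and $r(e)e^*=e^*s(e)=e^*$; $e^*f=\delta_{e,f}r(e)$; $v=\sum_{e\in s^{-1}(v)}ee^*$ for every $v\in X$. For a path $\alpha=\alpha_1\cdots\alpha_n$, $\alpha^*=\alpha_n^*\cdots\alpha_1^*$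 and $v^*=v$. Every element of $C_K^X(E)$ is a finite sum $\sum k_i\alpha_i\beta_i^*$ with $\alpha_i,\beta_i$ paths, $r(\alpha_i)=r(\beta_i)$; $C_K^X(E)$ is $\mathbb Z$-graded with degree-$n$ component spanned by the $\alpha\beta^*$ with $|\alpha|-|\beta|=n$. *)

theory Defs
  imports Main
begin

text \<open>Generators of the free algebra: vertices, real edges and ghost edges.\<close>
datatype ('v, 'e) gen = V 'v | Ed 'e | Gh 'e

text \<open>Elements of the free (non-unital) K-algebra on a generator set G are
  finitely supported K-valued functions on nonempty words over G.\<close>
definition free_elem :: "'a set \<Rightarrow> ('a list \<Rightarrow> 'k::field) \<Rightarrow> bool" where
  "free_elem G f \<longleftrightarrow> finite {w. f w \<noteq> 0} \<and> (\<forall>w. f w \<noteq> 0 \<longrightarrow> w \<noteq> [] \<and> set w \<subseteq> G)"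

definition fadd :: "('a list \<Rightarrow> 'k::field) \<Rightarrow> ('a list \<Rightarrow> 'k) \<Rightarrow> ('a list \<Rightarrow> 'k)" where
  "fadd f g = (\<lambda>w. f w + g w)"

definition fsub :: "('a list \<Rightarrow> 'k::field) \<Rightarrow> ('a list \<Rightarrow> 'k) \<Rightarrow> ('a list \<Rightarrow> 'k)" where
  "fsub f g = (\<lambda>w. f w - g w)"

definition fzero :: "'a list \<Rightarrow> 'k::field" where
  "fzero = (\<lambda>w. 0)"

definition smul :: "'k::field \<Rightarrow> ('a list \<Rightarrow> 'k) \<Rightarrow> ('a list \<Rightarrow> 'k)" where
  "smul k f = (\<lambda>w. k * f w)"

definition fmul :: "('a list \<Rightarrow> 'k::field) \<Rightarrow> ('a list \<Rightarrow> 'k) \<Rightarrow> ('a list \<Rightarrow> 'k)" where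
  "fmul f g = (\<lambda>w. \<Sum>i\<in>{0..length w}. f (take i w) * g (drop i w))"

definition wmono :: "'a list \<Rightarrow> ('a list \<Rightarrow> 'k::field)" where
  "wmono u = (\<lambda>w. if w = u then 1 else 0)"

definition fsum :: "'b set \<Rightarrow> ('b \<Rightarrow> ('a list \<Rightarrow> 'k::field)) \<Rightarrow> ('a list \<Rightarrow> 'k)" where
  "fsum A F = (\<lambda>w. \<Sum>x\<in>A. F x w)"

inductive_set gen_ideal :: "'a set \<Rightarrow> ('a list \<Rightarrow> 'k::field) set \<Rightarrow> ('a list \<Rightarrow> 'k) set"
  for G R where
  gen: "r \<in> R \<Longrightarrow> set u \<subseteq> G \<Longrightarrow> set v \<subseteq> G \<Longrightarrow> fmul (fmul (wmono u) r) (wmono v) \<in> gen_ideal G R"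
| zero: "fzero \<in> gen_ideal G R"
| add: "a \<in> gen_ideal G R \<Longrightarrow> b \<in> gen_ideal G R \<Longrightarrow> fadd a b \<in> gen_ideal G R"
| smul: "a \<in> gen_ideal G R \<Longrightarrow> smul k a \<in> gen_ideal G R"

definition alg_ideal :: "'a set \<Rightarrow> ('a list \<Rightarrow> 'k::field) set \<Rightarrow> bool" where
  "alg_ideal G J \<longleftrightarrow> J \<subseteq> {f. free_elem G f} \<and> fzero \<in> J
     \<and> (\<forall>a\<in>J. \<forall>b\<in>J. fadd a b \<in> J) \<and> (\<forall>a\<in>J. \<forall>k. smul k a \<in> J)
     \<and> (\<forall>a\<in>J. \<forall>x. free_elem G x \<longrightarrow> fmul x a \<in> J \<and> fmul a x \<in> J)"

definition gens :: "'v set \<Rightarrow> 'e set \<Rightarrow> ('v, 'e) gen set" where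
  "gens E0 E1 = V ` E0 \<union> Ed ` E1 \<union> Gh ` E1"

definition is_graph :: "'v set \<Rightarrow> 'e set \<Rightarrow> ('e \<Rightarrow> 'v) \<Rightarrow> ('e \<Rightarrow> 'v) \<Rightarrow> bool" where
  "is_graph E0 E1 r s \<longleftrightarrow> (\<forall>e\<in>E1. r e \<in> E0 \<and> s e \<in> E0)"

definition Reg :: "'v set \<Rightarrow> 'e set \<Rightarrow> ('e \<Rightarrow> 'v) \<Rightarrow> 'v set" where
  "Reg E0 E1 s = {v\<in>E0. finite {e\<in>E1. s e = v} \<and> {e\<in>E1. s e = v} \<noteq> {}}"

definition is_path :: "'v set \<Rightarrow> 'e set \<Rightarrow> ('e \<Rightarrow> 'v) \<Rightarrow> ('e \<Rightarrow> 'v) \<Rightarrow> 'v + 'e list \<Rightarrow> bool" where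
  "is_path E0 E1 r s p = (case p of
      Inl u \<Rightarrow> u \<in> E0
    | Inr es \<Rightarrow> es \<noteq> [] \<and> set es \<subseteq> E1 \<and>
                (\<forall>i. Suc i < length es \<longrightarrow> r (es ! i) = s (es ! Suc i)))"

definition pth :: "'v + 'e list \<Rightarrow> (('v, 'e) gen list \<Rightarrow> 'k::field)" where
  "pth p = (case p of Inl u \<Rightarrow> wmono [V u] | Inr es \<Rightarrow> wmono (map Ed es))"

definition pth_star :: "'v + 'e list \<Rightarrow> (('v, 'e) gen list \<Rightarrow> 'k::field)" where
  "pth_star p = (case p of Inl u \<Rightarrow> wmono [V u] | Inr es \<Rightarrow> wmono (rev (map Gh es)))"

definition gap :: "'e set \<Rightarrow> ('e \<Rightarrow> 'v) \<Rightarrow> 'v \<Rightarrow> (('v, 'e) gen list \<Rightarrow> 'k::field)" where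
  "gap E1 s v = fsub (wmono [V v]) (fsum {e\<in>E1. s e = v} (\<lambda>e. wmono [Ed e, Gh e]))"

definition cohn_rels :: "'v set \<Rightarrow> 'e set \<Rightarrow> ('e \<Rightarrow> 'v) \<Rightarrow> ('e \<Rightarrow> 'v) \<Rightarrow> 'v set
     \<Rightarrow> (('v, 'e) gen list \<Rightarrow> 'k::field) set" where
  "cohn_rels E0 E1 r s X =
      {fsub (wmono [V v, V w]) (if v = w then wmono [V v] else fzero) | v w. v \<in> E0 \<and> w \<in> E0}
    \<union> {fsub (wmono [V (s e), Ed e]) (wmono [Ed e]) | e. e \<in> E1}
    \<union> {fsub (wmono [Ed e, V (r e)]) (wmono [Ed e]) | e. e \<in> E1}
    \<union> {fsub (wmono [V (r e), Gh e]) (wmono [Gh e]) | e. e \<in> E1}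
    \<union> {fsub (wmono [Gh e, V (s e)]) (wmono [Gh e]) | e. e \<in> E1}
    \<union> {fsub (wmono [Gh e, Ed f]) (if e = f then wmono [V (r e)] else fzero) | e f. e \<in> E1 \<and> f \<in> E1}
    \<union> {gap E1 s v | v. v \<in> X}"

text \<open>The kernel of the quotient map from the free algebra onto C^X_K(E):
  two free elements represent the same element of C^X_K(E) iff their difference lies here.\<close>
definition cohn_ideal :: "'v set \<Rightarrow> 'e set \<Rightarrow> ('e \<Rightarrow> 'v) \<Rightarrow> ('e \<Rightarrow> 'v) \<Rightarrow> 'v set
     \<Rightarrow> (('v, 'e) gen list \<Rightarrow> 'k::field) set" where
  "cohn_ideal E0 E1 r s X = gen_ideal (gens E0 E1) (cohn_rels E0 E1 r s X)"

fun gdeg :: "('v, 'e) gen \<Rightarrow> int" where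
  "gdeg (V _) = 0" | "gdeg (Ed _) = 1" | "gdeg (Gh _) = -1"

definition wdeg :: "('v, 'e) gen list \<Rightarrow> int" where
  "wdeg w = sum_list (map gdeg w)"

definition homog :: "int \<Rightarrow> (('v, 'e) gen list \<Rightarrow> 'k::field) \<Rightarrow> bool" where
  "homog n f \<longleftrightarrow> (\<forall>w. f w \<noteq> 0 \<longrightarrow> wdeg w = n)"

definition hcomp :: "int \<Rightarrow> (('v, 'e) gen list \<Rightarrow> 'k::field) \<Rightarrow> (('v, 'e) gen list \<Rightarrow> 'k)" where
  "hcomp n f = (\<lambda>w. if wdeg w = n then f w else 0)"

end

theory Submission
  imports Defs "HOL-Library.Function_Algebras"
begin

lemma sum_fun_apply: "(sum F A) w = (\<Sum>x\<in>A. F x w)"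
  by (induction A rule: infinite_finite_induct) auto

lemma fadd_eq: "fadd f g = f + g" by (auto simp: fadd_def fun_eq_iff)
lemma fsub_eq: "fsub f g = f - g" by (auto simp: fsub_def fun_eq_iff)
lemma fzero_eq: "fzero = 0" by (auto simp: fzero_def fun_eq_iff)
lemma fsum_eq: "fsum A F = sum F A" by (auto simp: fsum_def fun_eq_iff sum_fun_apply)

lemma smul_add: "smul k (f + g) = smul k f + smul k g" by (auto simp: smul_def fun_eq_iff algebra_simps)
lemma smul_diff: "smul k (f - g) = smul k f - smul k g" by (auto simp: smul_def fun_eq_iff algebra_simps)
lemma smul_zero[simp]: "smul k 0 = 0" by (auto simp: smul_def fun_eq_iff)
lemma smul_zero2[simp]: "smul 0 f = 0" by (auto simp: smul_def fun_eq_iff)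
lemma smul_one[simp]: "smul 1 f = f" by (auto simp: smul_def fun_eq_iff)
lemma smul_smul: "smul k (smul l f) = smul (k*l) f" by (auto simp: smul_def fun_eq_iff)
lemma smul_sum: "smul k (sum F A) = sum (\<lambda>x. smul k (F x)) A"
  by (auto simp: smul_def fun_eq_iff sum_fun_apply sum_distrib_left)
lemma smul_neg: "smul (-1) f = - f" by (auto simp: smul_def fun_eq_iff)
lemma smul_add_left: "smul (k + l) f = smul k f + smul l f" by (auto simp: smul_def fun_eq_iff algebra_simps)

definition lmul :: "'a list \<Rightarrow> ('a list \<Rightarrow> 'k::field) \<Rightarrow> ('a list \<Rightarrow> 'k)" where
  "lmul u f = fmul (wmono u) f"
definition rmul :: "('a list \<Rightarrow> 'k::field) \<Rightarrow> 'a list \<Rightarrow> ('a list \<Rightarrow> 'k)" where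
  "rmul f u = fmul f (wmono u)"

lemma lmul_formula: "lmul u f w = (if \<exists>x. w = u @ x then f (drop (length u) w) else 0)"
proof -
  have "lmul u f w = (\<Sum>i\<in>{0..length w}. (if i = length u \<and> (\<exists>x. w = u @ x) then f (drop (length u) w) else 0))"
    unfolding lmul_def fmul_def wmono_def
    apply (rule sum.cong, simp)
    apply (auto simp: append_eq_conv_conj)
    by (metis append_take_drop_id)
  also have "\<dots> = (if \<exists>x. w = u @ x then f (drop (length u) w) else 0)"
    by (auto simp: sum.delta)
  finally show ?thesis .
qed

lemma rmul_formula: "rmul f u w = (if \<exists>x. w = x @ u then f (take (length w - length u) w) else 0)"
proof -
  have "rmul f u w = (\<Sum>i\<in>{0..length w}. (if i = length w - length u \<and> (\<exists>x. w = x @ u) then f (take (length w - length u) w) else 0))"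
    unfolding rmul_def fmul_def wmono_def
    apply (rule sum.cong, simp)
    apply (auto simp: append_eq_conv_conj)
    by (metis append_take_drop_id)
  also have "\<dots> = (if \<exists>x. w = x @ u then f (take (length w - length u) w) else 0)"
    by (auto simp: sum.delta)
  finally show ?thesis .
qed

lemma lmul_app: "lmul u f (u @ x) = f x" by (simp add: lmul_formula)
lemma rmul_app: "rmul f u (x @ u) = f x" by (simp add: rmul_formula)

lemma lmul_add: "lmul u (f + g) = lmul u f + lmul u g" by (auto simp: fun_eq_iff lmul_formula)
lemma rmul_add: "rmul (f + g) u = rmul f u + rmul g u" by (auto simp: fun_eq_iff rmul_formula)
lemma lmul_diff: "lmul u (f - g) = lmul u f - lmul u g" by (auto simp: fun_eq_iff lmul_formula)
lemma rmul_diff: "rmul (f - g) u = rmul f u - rmul g u" by (auto simp: fun_eq_iff rmul_formula)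
lemma lmul_zero[simp]: "lmul u 0 = 0" by (auto simp: fun_eq_iff lmul_formula)
lemma rmul_zero[simp]: "rmul 0 u = 0" by (auto simp: fun_eq_iff rmul_formula)
lemma lmul_smul: "lmul u (smul k f) = smul k (lmul u f)" by (auto simp: fun_eq_iff lmul_formula smul_def)
lemma rmul_smul: "rmul (smul k f) u = smul k (rmul f u)" by (auto simp: fun_eq_iff rmul_formula smul_def)
lemma lmul_sum: "lmul u (sum F A) = sum (\<lambda>x. lmul u (F x)) A"
  by (auto simp: fun_eq_iff lmul_formula sum_fun_apply)
lemma rmul_sum: "rmul (sum F A) u = sum (\<lambda>x. rmul (F x) u) A"
  by (auto simp: fun_eq_iff rmul_formula sum_fun_apply)
lemma lmul_wmono: "lmul u (wmono w) = wmono (u @ w)"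
  by (auto simp: fun_eq_iff lmul_formula wmono_def)
lemma rmul_wmono: "rmul (wmono w) u = wmono (w @ u)"
  by (auto simp: fun_eq_iff rmul_formula wmono_def)
lemma lmul_lmul: "lmul u (lmul v f) = lmul (u @ v) f"
  by (auto simp: fun_eq_iff lmul_formula)
lemma rmul_rmul: "rmul (rmul f u) v = rmul f (u @ v)"
  by (auto simp: fun_eq_iff rmul_formula)
lemma lmul_rmul: "lmul u (rmul f v) = rmul (lmul u f) v"
proof
  fix w
  show "lmul u (rmul f v) w = rmul (lmul u f) v w"
  proof (cases "\<exists>y. w = u @ y @ v")
    case True
    then obtain y where "w = u @ y @ v" by blast
    then show ?thesis by (metis append.assoc lmul_app rmul_app)
  next
    case False
    then have "lmul u (rmul f v) w = 0"
      by (auto simp: lmul_formula rmul_formula)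
    moreover have "rmul (lmul u f) v w = 0" using False
      by (auto simp: lmul_formula rmul_formula)
    ultimately show ?thesis by simp
  qed
qed
lemma lmul_Nil[simp]: "lmul [] f = f" by (auto simp: fun_eq_iff lmul_formula)
lemma rmul_Nil[simp]: "rmul f [] = f" by (auto simp: fun_eq_iff rmul_formula)


lemma gens_simps[simp]: "V x \<in> gens E0 E1 \<longleftrightarrow> x \<in> E0" "Ed e \<in> gens E0 E1 \<longleftrightarrow> e \<in> E1"
   "Gh e \<in> gens E0 E1 \<longleftrightarrow> e \<in> E1"
  by (auto simp: gens_def)

locale cohn =
  fixes E0 :: "'v set" and E1 :: "'e set" and r s :: "'e \<Rightarrow> 'v" and X :: "'v set"
  assumes graph: "is_graph E0 E1 r s" and XReg: "X \<subseteq> Reg E0 E1 s"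
begin

abbreviation "GG \<equiv> gens E0 E1"

definition II :: "(('v,'e) gen list \<Rightarrow> 'k::field) set" where "II = cohn_ideal E0 E1 r s X"

lemma re_E0[simp]: "e \<in> E1 \<Longrightarrow> r e \<in> E0" and se_E0[simp]: "e \<in> E1 \<Longrightarrow> s e \<in> E0"
  using graph by (auto simp: is_graph_def)

lemma I_zero[simp]: "0 \<in> II"
  unfolding II_def cohn_ideal_def using gen_ideal.zero[of "gens E0 E1"] by (simp add: fzero_eq)
lemma I_add: "a \<in> II \<Longrightarrow> b \<in> II \<Longrightarrow> a + b \<in> II"
  unfolding II_def cohn_ideal_def using gen_ideal.add by (metis fadd_eq)
lemma I_smul: "a \<in> II \<Longrightarrow> smul k a \<in> II"
  unfolding II_def cohn_ideal_def using gen_ideal.smul by metis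
lemma I_neg: "a \<in> II \<Longrightarrow> - a \<in> II"
  using I_smul smul_neg by metis
lemma I_diff: "a \<in> II \<Longrightarrow> b \<in> II \<Longrightarrow> a - b \<in> II"
  using I_add I_neg by (metis diff_conv_add_uminus)
lemma I_sum: "finite A \<Longrightarrow> (\<And>x. x \<in> A \<Longrightarrow> F x \<in> II) \<Longrightarrow> sum F A \<in> II"
  by (induction A rule: finite_induct) (auto intro: I_add)
lemma I_sum_list: "(\<And>x. x \<in> set xs \<Longrightarrow> x \<in> II) \<Longrightarrow> sum_list xs \<in> II"
  by (induction xs) (auto intro: I_add)

lemma I_gen: "\<rho> \<in> cohn_rels E0 E1 r s X \<Longrightarrow> set p \<subseteq> GG \<Longrightarrow> set q \<subseteq> GG \<Longrightarrow> rmul (lmul p \<rho>) q \<in> II"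
  unfolding II_def cohn_ideal_def lmul_def rmul_def by (rule gen_ideal.gen)

lemma I_lmul: "a \<in> II \<Longrightarrow> set u \<subseteq> GG \<Longrightarrow> lmul u a \<in> II"
  unfolding II_def cohn_ideal_def
proof (induction rule: gen_ideal.induct)
  case (gen \<rho> p q)
  have "lmul u (fmul (fmul (wmono p) \<rho>) (wmono q)) = rmul (lmul (u @ p) \<rho>) q"
    by (simp add: lmul_def[symmetric] rmul_def[symmetric] lmul_rmul lmul_lmul)
  then show ?case using gen I_gen[unfolded II_def cohn_ideal_def, of \<rho> "u@p" q] by auto
next
  case zero
  have "lmul u fzero = fzero" by (simp add: fzero_eq)
  then show ?case using gen_ideal.zero by metis
next
  case (add a b)
  have "lmul u (fadd a b) = fadd (lmul u a) (lmul u b)" by (simp add: fadd_eq lmul_add)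
  then show ?case using add gen_ideal.add by metis
next
  case (smul a k) then show ?case by (simp add: lmul_smul gen_ideal.smul)
qed

lemma I_rmul: "a \<in> II \<Longrightarrow> set u \<subseteq> GG \<Longrightarrow> rmul a u \<in> II"
  unfolding II_def cohn_ideal_def
proof (induction rule: gen_ideal.induct)
  case (gen \<rho> p q)
  have "rmul (fmul (fmul (wmono p) \<rho>) (wmono q)) u = rmul (lmul p \<rho>) (q @ u)"
    by (simp add: lmul_def[symmetric] rmul_def[symmetric] rmul_rmul)
  then show ?case using gen I_gen[unfolded II_def cohn_ideal_def, of \<rho> p "q@u"] by auto
next
  case zero
  have "rmul fzero u = fzero" by (simp add: fzero_eq)
  then show ?case using gen_ideal.zero by metis
next
  case (add a b)
  have "rmul (fadd a b) u = fadd (rmul a u) (rmul b u)" by (simp add: fadd_eq rmul_add)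
  then show ?case using add gen_ideal.add by metis
next
  case (smul a k) then show ?case by (simp add: rmul_smul gen_ideal.smul)
qed

definition cg :: "(('v,'e) gen list \<Rightarrow> 'k::field) \<Rightarrow> (('v,'e) gen list \<Rightarrow> 'k) \<Rightarrow> bool" where
  "cg x y \<longleftrightarrow> x - y \<in> II"

lemma cg_refl[simp]: "cg x x" by (simp add: cg_def)
lemma cg_sym: "cg x y \<Longrightarrow> cg y x" unfolding cg_def using I_neg by fastforce
lemma cg_trans: "cg x y \<Longrightarrow> cg y z \<Longrightarrow> cg x z" unfolding cg_def using I_add by fastforce
lemma cg_add: "cg x y \<Longrightarrow> cg x' y' \<Longrightarrow> cg (x + x') (y + y')" unfolding cg_def
proof -
  assume "x - y \<in> II" "x' - y' \<in> II"
  moreover have "(x + x') - (y + y') = (x - y) + (x' - y')" by (simp add: algebra_simps)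
  ultimately show "(x + x') - (y + y') \<in> II" using I_add by metis
qed
lemma cg_diff: "cg x y \<Longrightarrow> cg x' y' \<Longrightarrow> cg (x - x') (y - y')" unfolding cg_def
proof -
  assume "x - y \<in> II" "x' - y' \<in> II"
  moreover have "(x - x') - (y - y') = (x - y) - (x' - y')" by (simp add: algebra_simps)
  ultimately show "(x - x') - (y - y') \<in> II" using I_diff by metis
qed
lemma cg_smul: "cg x y \<Longrightarrow> cg (smul k x) (smul k y)" unfolding cg_def
  using I_smul by (metis smul_diff)
lemma cg_lmul: "cg x y \<Longrightarrow> set u \<subseteq> GG \<Longrightarrow> cg (lmul u x) (lmul u y)" unfolding cg_def
  using I_lmul by (metis lmul_diff)
lemma cg_rmul: "cg x y \<Longrightarrow> set u \<subseteq> GG \<Longrightarrow> cg (rmul x u) (rmul y u)" unfolding cg_def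
  using I_rmul by (metis rmul_diff)
lemma cg_sum: "(\<And>i. i \<in> A \<Longrightarrow> cg (F i) (H i)) \<Longrightarrow> cg (sum F A) (sum H A)"
proof (induction A rule: infinite_finite_induct)
  case (insert x A)
  then have "cg (F x + sum F A) (H x + sum H A)" by (intro cg_add) auto
  then show ?case using insert by (simp add: sum.insert del: plus_fun_apply)
qed auto
lemma cg_sum_list: "list_all2 cg xs ys \<Longrightarrow> cg (sum_list xs) (sum_list ys)"
proof (induction rule: list_all2_induct)
  case (Cons x xs y ys)
  then show ?case using cg_add[of x y "sum_list xs" "sum_list ys"] by (simp only: sum_list.Cons)
qed simp
lemma cg_zero_iff: "cg x 0 \<longleftrightarrow> x \<in> II" by (simp add: cg_def)
lemma cg_notI: "cg x y \<Longrightarrow> x \<notin> II \<Longrightarrow> y \<notin> II"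
  unfolding cg_def using I_add by fastforce

lemma rel_word: "fsub (wmono x) (wmono y :: _ \<Rightarrow> 'k::field) \<in> cohn_rels E0 E1 r s X \<Longrightarrow> set p \<subseteq> GG \<Longrightarrow> set q \<subseteq> GG
   \<Longrightarrow> cg (wmono (p @ x @ q)) (wmono (p @ y @ q) :: _ \<Rightarrow> 'k)"
proof -
  assume a: "fsub (wmono x) (wmono y :: _ \<Rightarrow> 'k) \<in> cohn_rels E0 E1 r s X" "set p \<subseteq> GG" "set q \<subseteq> GG"
  have "rmul (lmul p (fsub (wmono x) (wmono y :: _ \<Rightarrow> 'k))) q \<in> II" by (rule I_gen[OF a])
  then show ?thesis by (simp add: cg_def fsub_eq lmul_diff rmul_diff lmul_wmono rmul_wmono)
qed
lemma rel_word0: "fsub (wmono x) (fzero :: _ \<Rightarrow> 'k::field) \<in> cohn_rels E0 E1 r s X \<Longrightarrow> set p \<subseteq> GG \<Longrightarrow> set q \<subseteq> GG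
   \<Longrightarrow> cg (wmono (p @ x @ q)) (0 :: _ \<Rightarrow> 'k)"
proof -
  assume a: "fsub (wmono x) (fzero :: _ \<Rightarrow> 'k) \<in> cohn_rels E0 E1 r s X" "set p \<subseteq> GG" "set q \<subseteq> GG"
  have "rmul (lmul p (fsub (wmono x) (fzero :: _ \<Rightarrow> 'k))) q \<in> II" by (rule I_gen[OF a])
  then show ?thesis by (simp add: cg_def fsub_eq fzero_eq lmul_diff rmul_diff lmul_wmono rmul_wmono)
qed

context
  fixes p q :: "('v,'e) gen list"
  assumes pq: "set p \<subseteq> GG" "set q \<subseteq> GG"
begin

lemma R_vv: assumes "x \<in> E0" shows "cg (wmono (p @ V x # V x # q)) (wmono (p @ V x # q) :: _ \<Rightarrow> 'k::field)"
proof -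
  have "fsub (wmono [V x, V x]) (if x = x then wmono [V x] else (fzero :: _ \<Rightarrow> 'k)) \<in> cohn_rels E0 E1 r s X" unfolding cohn_rels_def using assms by blast
  then show ?thesis using rel_word[OF _ pq, of "[V x, V x]" "[V x]"] assms by simp
qed
lemma R_vw: assumes "x \<in> E0" "y \<in> E0" "x \<noteq> y" shows "cg (wmono (p @ V x # V y # q)) (0 :: _ \<Rightarrow> 'k::field)"
proof -
  have "fsub (wmono [V x, V y]) (if x = y then wmono [V x] else (fzero :: _ \<Rightarrow> 'k)) \<in> cohn_rels E0 E1 r s X" unfolding cohn_rels_def using assms by blast
  then show ?thesis using rel_word0[OF _ pq, of "[V x, V y]"] assms by simp
qed
lemma R_se: assumes "e \<in> E1" shows "cg (wmono (p @ V (s e) # Ed e # q)) (wmono (p @ Ed e # q) :: _ \<Rightarrow> 'k::field)"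
proof -
  have "fsub (wmono [V (s e), Ed e]) (wmono [Ed e] :: _ \<Rightarrow> 'k) \<in> cohn_rels E0 E1 r s X" unfolding cohn_rels_def using assms by blast
  then show ?thesis using rel_word[OF _ pq, of "[V (s e), Ed e]" "[Ed e]"] assms by simp
qed
lemma R_er: assumes "e \<in> E1" shows "cg (wmono (p @ Ed e # V (r e) # q)) (wmono (p @ Ed e # q) :: _ \<Rightarrow> 'k::field)"
proof -
  have "fsub (wmono [Ed e, V (r e)]) (wmono [Ed e] :: _ \<Rightarrow> 'k) \<in> cohn_rels E0 E1 r s X" unfolding cohn_rels_def using assms by blast
  then show ?thesis using rel_word[OF _ pq, of "[Ed e, V (r e)]" "[Ed e]"] assms by simp
qed
lemma R_rg: assumes "e \<in> E1" shows "cg (wmono (p @ V (r e) # Gh e # q)) (wmono (p @ Gh e # q) :: _ \<Rightarrow> 'k::field)"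
proof -
  have "fsub (wmono [V (r e), Gh e]) (wmono [Gh e] :: _ \<Rightarrow> 'k) \<in> cohn_rels E0 E1 r s X" unfolding cohn_rels_def using assms by blast
  then show ?thesis using rel_word[OF _ pq, of "[V (r e), Gh e]" "[Gh e]"] assms by simp
qed
lemma R_gs: assumes "e \<in> E1" shows "cg (wmono (p @ Gh e # V (s e) # q)) (wmono (p @ Gh e # q) :: _ \<Rightarrow> 'k::field)"
proof -
  have "fsub (wmono [Gh e, V (s e)]) (wmono [Gh e] :: _ \<Rightarrow> 'k) \<in> cohn_rels E0 E1 r s X" unfolding cohn_rels_def using assms by blast
  then show ?thesis using rel_word[OF _ pq, of "[Gh e, V (s e)]" "[Gh e]"] assms by simp
qed
lemma R_gee: assumes "e \<in> E1" shows "cg (wmono (p @ Gh e # Ed e # q)) (wmono (p @ V (r e) # q) :: _ \<Rightarrow> 'k::field)"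
proof -
  have "fsub (wmono [Gh e, Ed e]) (if e = e then wmono [V (r e)] else (fzero :: _ \<Rightarrow> 'k)) \<in> cohn_rels E0 E1 r s X" unfolding cohn_rels_def using assms by blast
  then show ?thesis using rel_word[OF _ pq, of "[Gh e, Ed e]" "[V (r e)]"] assms by simp
qed
lemma R_gef: assumes "e \<in> E1" "f \<in> E1" "e \<noteq> f" shows "cg (wmono (p @ Gh e # Ed f # q)) (0 :: _ \<Rightarrow> 'k::field)"
proof -
  have "fsub (wmono [Gh e, Ed f]) (if e = f then wmono [V (r e)] else (fzero :: _ \<Rightarrow> 'k)) \<in> cohn_rels E0 E1 r s X" unfolding cohn_rels_def using assms by blast
  then show ?thesis using rel_word0[OF _ pq, of "[Gh e, Ed f]"] assms by simp
qed
end

end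

context cohn begin

declare cg_trans[trans]

lemma R_gap: assumes "v \<in> X" "set p \<subseteq> GG" "set q \<subseteq> GG"
  shows "cg (wmono (p @ V v # q)) (sum (\<lambda>e. wmono (p @ Ed e # Gh e # q)) {e\<in>E1. s e = v} :: _ \<Rightarrow> 'k::field)"
proof -
  have "(gap E1 s v :: _ \<Rightarrow> 'k) \<in> cohn_rels E0 E1 r s X" unfolding cohn_rels_def using assms by blast
  then have "rmul (lmul p (gap E1 s v :: _ \<Rightarrow> 'k)) q \<in> II" using I_gen assms by blast
  then show ?thesis
    by (simp add: cg_def gap_def fsub_eq fsum_eq lmul_diff rmul_diff lmul_wmono rmul_wmono lmul_sum rmul_sum)
qed

definition lv :: "('v,'e) gen \<Rightarrow> 'v" where "lv g = (case g of V x \<Rightarrow> x | Ed e \<Rightarrow> s e | Gh e \<Rightarrow> r e)"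
definition rv :: "('v,'e) gen \<Rightarrow> 'v" where "rv g = (case g of V x \<Rightarrow> x | Ed e \<Rightarrow> r e | Gh e \<Rightarrow> s e)"

lemma lv_simps[simp]: "lv (V x) = x" "lv (Ed e) = s e" "lv (Gh e) = r e" by (auto simp: lv_def)
lemma rv_simps[simp]: "rv (V x) = x" "rv (Ed e) = r e" "rv (Gh e) = s e" by (auto simp: rv_def)
lemma lv_E0: "g \<in> GG \<Longrightarrow> lv g \<in> E0" by (cases g) auto
lemma rv_E0: "g \<in> GG \<Longrightarrow> rv g \<in> E0" by (cases g) auto

lemma exp_l: assumes "g \<in> GG" "set p \<subseteq> GG" "set q \<subseteq> GG"
  shows "cg (wmono (p @ V (lv g) # g # q)) (wmono (p @ g # q) :: _ \<Rightarrow> 'k::field)"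
  using assms by (cases g) (auto intro: R_vv R_se R_rg)

lemma exp_r: assumes "g \<in> GG" "set p \<subseteq> GG" "set q \<subseteq> GG"
  shows "cg (wmono (p @ g # V (rv g) # q)) (wmono (p @ g # q) :: _ \<Rightarrow> 'k::field)"
  using assms by (cases g) (auto intro: R_vv R_er R_gs)

lemma mismatch: assumes "ga \<in> GG" "gb \<in> GG" "set p \<subseteq> GG" "set q \<subseteq> GG" "rv ga \<noteq> lv gb"
  shows "cg (wmono (p @ ga # gb # q)) (0 :: _ \<Rightarrow> 'k::field)"
proof -
  have "cg (wmono (p @ ga # gb # q)) (wmono (p @ ga # V (rv ga) # gb # q) :: _ \<Rightarrow> 'k)"
    using exp_r[of ga p "gb # q"] assms by (auto intro: cg_sym)
  also have "cg (wmono (p @ ga # V (rv ga) # gb # q)) (wmono ((p @ [ga, V (rv ga)]) @ V (lv gb) # gb # q) :: _ \<Rightarrow> 'k)"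
    using exp_l[of gb "p @ [ga, V (rv ga)]" q] assms rv_E0 by (auto intro: cg_sym)
  also have "cg (wmono ((p @ [ga, V (rv ga)]) @ V (lv gb) # gb # q)) (0 :: _ \<Rightarrow> 'k)"
    using R_vw[of "p @ [ga]" "gb # q" "rv ga" "lv gb"] assms rv_E0 lv_E0 by auto
  finally show ?thesis .
qed

end

type_synonym ('v,'e) tri = "'v \<times> 'e list \<times> 'e list"

fun nw :: "('v,'e) tri \<Rightarrow> ('v,'e) gen list" where
  "nw (u, as, bs) = (if as = [] \<and> bs = [] then [V u] else map Ed as @ rev (map Gh bs))"

definition evo :: "('v,'e) tri option \<Rightarrow> (('v,'e) gen list \<Rightarrow> 'k::field)" where
  "evo t = (case t of None \<Rightarrow> 0 | Some t' \<Rightarrow> wmono (nw t'))"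

lemma evo_simps[simp]: "evo None = 0" "evo (Some t) = wmono (nw t)" by (auto simp: evo_def)

context cohn begin

declare cg_trans[trans]

definition chain :: "'e list \<Rightarrow> bool" where "chain es = successively (\<lambda>e f. r e = s f) es"

fun valid :: "('v,'e) tri \<Rightarrow> bool" where
  "valid (u, as, bs) \<longleftrightarrow> u \<in> E0 \<and> set as \<subseteq> E1 \<and> set bs \<subseteq> E1 \<and> chain as \<and> chain bs
     \<and> (as \<noteq> [] \<longrightarrow> r (last as) = u) \<and> (bs \<noteq> [] \<longrightarrow> r (last bs) = u)"

definition start :: "'e list \<Rightarrow> 'v \<Rightarrow> 'v" where
  "start es u = (case es of [] \<Rightarrow> u | e # _ \<Rightarrow> s e)"

lemma start_simps[simp]: "start [] u = u" "start (e # es) u = s e" by (auto simp: start_def)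
lemma start_if: "start es u = (if es = [] then u else s (hd es))" by (cases es) auto

lemma chain_simps[simp]: "chain []" "chain [e]"
  "chain (e # f # es) \<longleftrightarrow> r e = s f \<and> chain (f # es)" by (auto simp: chain_def)
lemma chain_Cons: "chain (e # es) \<longleftrightarrow> (es = [] \<or> r e = s (hd es)) \<and> chain es"
  by (cases es) auto
lemma chain_app1: "chain (es @ [f]) \<longleftrightarrow> chain es \<and> (es = [] \<or> r (last es) = s f)"
  by (induction es rule: induct_list012) (auto simp: chain_Cons)

fun Lt :: "('v,'e) gen \<Rightarrow> ('v,'e) tri \<Rightarrow> ('v,'e) tri option" where
  "Lt (V x) (u, as, bs) = (if start as u = x then Some (u, as, bs) else None)"
| "Lt (Ed e) (u, as, bs) = (if r e = start as u then Some (u, e # as, bs) else None)"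
| "Lt (Gh e) (u, [], bs) = (if s e = u then Some (r e, [], bs @ [e]) else None)"
| "Lt (Gh e) (u, f # as, bs) = (if f = e then Some (u, as, bs) else None)"

fun Rt :: "('v,'e) gen \<Rightarrow> ('v,'e) tri \<Rightarrow> ('v,'e) tri option" where
  "Rt (V x) (u, as, bs) = (if start bs u = x then Some (u, as, bs) else None)"
| "Rt (Gh f) (u, as, bs) = (if r f = start bs u then Some (u, as, f # bs) else None)"
| "Rt (Ed f) (u, as, []) = (if s f = u then Some (r f, as @ [f], []) else None)"
| "Rt (Ed f) (u, as, b # bs) = (if b = f then Some (u, as, bs) else None)"

lemma img_GG[simp]: "Ed ` A \<subseteq> GG \<longleftrightarrow> A \<subseteq> E1" "Gh ` A \<subseteq> GG \<longleftrightarrow> A \<subseteq> E1" "V ` B \<subseteq> GG \<longleftrightarrow> B \<subseteq> E0"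
  by (auto simp: gens_def)

lemma nw_GG: "valid t \<Longrightarrow> set (nw t) \<subseteq> GG"
  by (cases t) auto

lemma nw_first: assumes "valid (u, as, bs)"
  shows "\<exists>g1 w. nw (u, as, bs) = g1 # w \<and> lv g1 = start as u \<and> g1 \<in> GG \<and> set w \<subseteq> GG"
  using assms
proof (cases as)
  case Nil
  then show ?thesis using assms
    by (cases bs rule: rev_cases) auto
next
  case (Cons a as')
  then show ?thesis using assms by auto
qed

lemma nw_last: assumes "valid (u, as, bs)"
  shows "\<exists>g1 w. nw (u, as, bs) = w @ [g1] \<and> rv g1 = start bs u \<and> g1 \<in> GG \<and> set w \<subseteq> GG"
  using assms
proof (cases bs)
  case Nil
  then show ?thesis using assms
    by (cases as rule: rev_cases) auto
next
  case (Cons b bs')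
  then show ?thesis using assms by auto
qed

lemma valid_tail: "valid (u, a # as, bs) \<Longrightarrow> valid (u, as, bs)"
  by (cases as) auto

lemma Lt_valid: "valid t \<Longrightarrow> g \<in> GG \<Longrightarrow> Lt g t = Some t' \<Longrightarrow> valid t'"
proof (cases t)
  case (fields u as bs)
  assume a: "valid t" "g \<in> GG" "Lt g t = Some t'"
  show ?thesis
  proof (cases g)
    case (Gh e)
    then show ?thesis using a fields
      by (cases as) (auto simp: chain_app1 chain_Cons split: if_splits dest: valid_tail)
  qed (use a fields in \<open>auto simp: chain_app1 chain_Cons start_if split: if_splits\<close>)
qed

lemma Lt_cg: assumes vt: "valid t" and g: "g \<in> GG"
  shows "cg (wmono (g # nw t)) (evo (Lt g t) :: _ \<Rightarrow> 'k::field)"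
proof -
  obtain u as bs where t: "t = (u, as, bs)" by (cases t)
  obtain g1 w where gw: "nw t = g1 # w" "lv g1 = start as u" "g1 \<in> GG" "set w \<subseteq> GG"
    using nw_first vt t by blast
  have mm: "cg (wmono (g # nw t)) (0 :: _ \<Rightarrow> 'k)" if "rv g \<noteq> start as u"
    using mismatch[where p = "[]" and ga = g and gb = g1 and q = w] gw g that by auto
  show ?thesis
  proof (cases g)
    case (V x)
    show ?thesis
    proof (cases "start as u = x")
      case True
      then show ?thesis using exp_l[where p = "[]" and q = w and g = g1] gw V t by auto
    next
      case False then show ?thesis using mm V t by auto
    qed
  next
    case (Ed e)
    show ?thesis
    proof (cases "r e = start as u")
      case True
      show ?thesis
      proof (cases "as = [] \<and> bs = []")
        case True
        then show ?thesis using R_er[where p = "[]" and q = "[]" and e = e] g Ed t \<open>r e = start as u\<close> by auto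
      qed (use True Ed t in auto)
    next
      case False then show ?thesis using mm Ed t by auto
    qed
  next
    case (Gh e)
    show ?thesis
    proof (cases as)
      case Nil
      show ?thesis
      proof (cases "s e = u")
        case True
        show ?thesis
        proof (cases "bs = []")
          case True
          then show ?thesis using R_gs[where p = "[]" and q = "[]" and e = e] g Gh t Nil \<open>s e = u\<close> by auto
        qed (use True Gh t Nil in auto)
      next
        case False then show ?thesis using mm Gh t Nil by auto
      qed
    next
      case (Cons f as')
      show ?thesis
      proof (cases "f = e")
        case True
        have v': "valid (u, as', bs)" using vt t Cons valid_tail by blast
        have e1: "cg (wmono (g # nw t)) (wmono (V (r e) # map Ed as' @ rev (map Gh bs)) :: _ \<Rightarrow> 'k)"
          using R_gee[where p = "[]" and q = "map Ed as' @ rev (map Gh bs)" and e = e] g Gh t Cons True vt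
          by auto
        show ?thesis
        proof (cases "as' = [] \<and> bs = []")
          case True
          then have "u = r e" using vt t Cons \<open>f = e\<close> by auto
          then show ?thesis using e1 True Gh t Cons \<open>f = e\<close> by auto
        next
          case False
          obtain g2 w2 where gw2: "nw (u, as', bs) = g2 # w2" "lv g2 = start as' u" "g2 \<in> GG" "set w2 \<subseteq> GG"
            using nw_first v' by blast
          have "lv g2 = r e" using gw2 vt t Cons \<open>f = e\<close> by (cases as') auto
          then have "cg (wmono (V (r e) # nw (u, as', bs))) (wmono (nw (u, as', bs)) :: _ \<Rightarrow> 'k)"
            using exp_l[where p = "[]" and q = w2 and g = g2] gw2 by auto
          then show ?thesis using e1 False Gh t Cons \<open>f = e\<close> by (auto intro: cg_trans)
        qed
      next
        case False
        then show ?thesis using R_gef[where p = "[]" and q = "map Ed as' @ rev (map Gh bs)" and e = e and f = f]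
            g Gh t Cons vt by auto
      qed
    qed
  qed
qed

lemma valid_tail2: "valid (u, as, b # bs) \<Longrightarrow> valid (u, as, bs)"
  by (cases bs) auto

lemma Rt_valid: "valid t \<Longrightarrow> g \<in> GG \<Longrightarrow> Rt g t = Some t' \<Longrightarrow> valid t'"
proof (cases t)
  case (fields u as bs)
  assume a: "valid t" "g \<in> GG" "Rt g t = Some t'"
  show ?thesis
  proof (cases g)
    case (Ed e)
    then show ?thesis using a fields
      by (cases bs) (auto simp: chain_app1 chain_Cons start_if split: if_splits dest: valid_tail2)
  qed (use a fields in \<open>auto simp: chain_app1 chain_Cons start_if split: if_splits\<close>)
qed

lemma Rt_cg: assumes vt: "valid t" and g: "g \<in> GG"
  shows "cg (wmono (nw t @ [g])) (evo (Rt g t) :: _ \<Rightarrow> 'k::field)"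
proof -
  obtain u as bs where t: "t = (u, as, bs)" by (cases t)
  obtain g1 w where gw: "nw t = w @ [g1]" "rv g1 = start bs u" "g1 \<in> GG" "set w \<subseteq> GG"
    using nw_last vt t by blast
  have mm: "cg (wmono (nw t @ [g])) (0 :: _ \<Rightarrow> 'k)" if "lv g \<noteq> start bs u"
    using mismatch[where p = w and ga = g1 and gb = g and q = "[]"] gw g that by auto
  show ?thesis
  proof (cases g)
    case (V x)
    show ?thesis
    proof (cases "start bs u = x")
      case True
      then show ?thesis using exp_r[where p = w and q = "[]" and g = g1] gw V t by auto
    next
      case False then show ?thesis using mm V t by auto
    qed
  next
    case (Gh e)
    show ?thesis
    proof (cases "r e = start bs u")
      case True
      show ?thesis
      proof (cases "as = [] \<and> bs = []")
        case True
        then show ?thesis using R_rg[where p = "[]" and q = "[]" and e = e] g Gh t \<open>r e = start bs u\<close> by auto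
      qed (use True Gh t in auto)
    next
      case False then show ?thesis using mm Gh t by auto
    qed
  next
    case (Ed e)
    show ?thesis
    proof (cases bs)
      case Nil
      show ?thesis
      proof (cases "s e = u")
        case True
        show ?thesis
        proof (cases "as = []")
          case True
          then show ?thesis using R_se[where p = "[]" and q = "[]" and e = e] g Ed t Nil \<open>s e = u\<close> by auto
        qed (use True Ed t Nil in auto)
      next
        case False then show ?thesis using mm Ed t Nil by auto
      qed
    next
      case (Cons f bs')
      show ?thesis
      proof (cases "f = e")
        case True
        have v': "valid (u, as, bs')" using vt t Cons valid_tail2 by blast
        have e1: "cg (wmono (nw t @ [g])) (wmono ((map Ed as @ rev (map Gh bs')) @ [V (r e)]) :: _ \<Rightarrow> 'k)"
          using R_gee[where q = "[]" and p = "map Ed as @ rev (map Gh bs')" and e = e] g Ed t Cons True vt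
          by auto
        show ?thesis
        proof (cases "as = [] \<and> bs' = []")
          case True
          then have "u = r e" using vt t Cons \<open>f = e\<close> by auto
          then show ?thesis using e1 True Ed t Cons \<open>f = e\<close> by auto
        next
          case False
          obtain g2 w2 where gw2: "nw (u, as, bs') = w2 @ [g2]" "rv g2 = start bs' u" "g2 \<in> GG" "set w2 \<subseteq> GG"
            using nw_last v' by blast
          have "rv g2 = r e" using gw2 vt t Cons \<open>f = e\<close> by (cases bs') auto
          then have "cg (wmono (nw (u, as, bs') @ [V (r e)])) (wmono (nw (u, as, bs')) :: _ \<Rightarrow> 'k)"
            using exp_r[where p = w2 and q = "[]" and g = g2] gw2 by auto
          then show ?thesis using e1 False Ed t Cons \<open>f = e\<close> by (auto intro: cg_trans)
        qed
      next
        case False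
        then show ?thesis using R_gef[where q = "[]" and p = "map Ed as @ rev (map Gh bs')" and e = f and f = e]
            g Ed t Cons vt by auto
      qed
    qed
  qed
qed

end

definition lift :: "('t \<Rightarrow> 't option) \<Rightarrow> ('k \<times> 't) list \<Rightarrow> ('k \<times> 't) list" where
  "lift f P = concat (map (\<lambda>(k, t). case f t of None \<Rightarrow> [] | Some t' \<Rightarrow> [(k, t')]) P)"

lemma lift_Nil[simp]: "lift f [] = []" by (simp add: lift_def)
lemma lift_Cons[simp]: "lift f ((k, t) # P) = (case f t of None \<Rightarrow> [] | Some t' \<Rightarrow> [(k, t')]) @ lift f P"
  by (simp add: lift_def)

lemma lift_set: "(k, t') \<in> set (lift f P) \<Longrightarrow> \<exists>t. (k, t) \<in> set P \<and> f t = Some t'"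
proof (induction P)
  case (Cons a P)
  obtain k1 t1 where a: "a = (k1, t1)" by (cases a)
  show ?case
  proof (cases "f t1")
    case None then show ?thesis using Cons a by auto
  next
    case (Some t2)
    then have "(k, t') = (k1, t2) \<or> (k, t') \<in> set (lift f P)" using Cons.prems a by auto
    then show ?thesis using Cons.IH a Some by auto
  qed
qed simp

lemma lift_lift: "lift f (lift h P) = lift (\<lambda>t. Option.bind (h t) f) P"
  by (induction P) (auto split: option.splits)

definition evh :: "('t \<Rightarrow> ('a list \<Rightarrow> 'k::field)) \<Rightarrow> ('k \<times> 't) list \<Rightarrow> ('a list \<Rightarrow> 'k)" where
  "evh h P = sum_list (map (\<lambda>(k, t). smul k (h t)) P)"

lemma evh_Nil[simp]: "evh h [] = 0" by (simp add: evh_def)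
lemma evh_Cons[simp]: "evh h ((k, t) # P) = smul k (h t) + evh h P" by (simp add: evh_def)

lemma evh_add: "evh (\<lambda>t. h1 t + h2 t) P = evh h1 P + evh h2 P"
  by (induction P) (auto simp: smul_add algebra_simps simp del: plus_fun_apply)
lemma evh_diff: "evh (\<lambda>t. h1 t - h2 t) P = evh h1 P - evh h2 P"
  by (induction P) (auto simp: smul_diff algebra_simps simp del: plus_fun_apply minus_apply)
lemma evh_sum: "evh (\<lambda>t. sum (\<lambda>i. h i t) F) P = sum (\<lambda>i. evh (h i) P) F"
  by (induction P) (auto simp: smul_sum sum.distrib simp del: plus_fun_apply)
lemma evh_cong: "(\<And>k t. (k, t) \<in> set P \<Longrightarrow> h1 t = h2 t) \<Longrightarrow> evh h1 P = evh h2 P"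
  unfolding evh_def by (rule arg_cong[where f = sum_list], rule map_cong) auto
lemma evh_point: "evh (\<lambda>t. if t = t0 then H else 0) P = smul (sum_list (map (\<lambda>(k,t). if t = t0 then k else 0) P)) H"
  by (induction P) (auto simp: smul_add_left simp del: plus_fun_apply)

definition evo2 :: "('t \<Rightarrow> ('a list \<Rightarrow> 'k::field)) \<Rightarrow> 't option \<Rightarrow> ('a list \<Rightarrow> 'k)" where
  "evo2 h t = (case t of None \<Rightarrow> 0 | Some t' \<Rightarrow> h t')"

lemma evh_lift: "evh h (lift f P) = evh (\<lambda>t. evo2 h (f t)) P"
  by (induction P) (auto simp: evo2_def split: option.splits simp del: plus_fun_apply)

definition ev :: "('k::field \<times> ('v,'e) tri) list \<Rightarrow> (('v,'e) gen list \<Rightarrow> 'k)" where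
  "ev P = evh (\<lambda>t. wmono (nw t)) P"

lemma evo2_evo: "evo2 (\<lambda>t. wmono (nw t)) = evo"
  by (auto simp: fun_eq_iff evo2_def evo_def split: option.splits)

lemma ev_lift: "ev (lift f P) = evh (\<lambda>t. evo (f t)) P"
  by (simp add: ev_def evh_lift evo2_evo)

definition msr :: "('k \<times> ('v,'e) tri) list \<Rightarrow> nat" where
  "msr P = sum_list (map (\<lambda>(k, (u, as, bs)). length as + length bs) P)"

fun sz :: "('v,'e) tri \<Rightarrow> nat" where "sz (u, as, bs) = length as + length bs"

lemma msr_alt: "msr P = sum_list (map (\<lambda>(k, t). sz t) P)"
  unfolding msr_def by (rule arg_cong[where f = sum_list], rule map_cong) auto

lemma msr_lift_le: "(\<And>k t t'. (k, t) \<in> set P \<Longrightarrow> f t = Some t' \<Longrightarrow> sz t' \<le> sz t) \<Longrightarrow> msr (lift f P) \<le> msr P"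
proof (induction P)
  case (Cons a P)
  then show ?case by (cases a) (fastforce simp: msr_alt split: option.splits)
qed (simp add: msr_alt)

lemma msr_lift_less: "(\<And>k t t'. (k, t) \<in> set P \<Longrightarrow> f t = Some t' \<Longrightarrow> sz t' \<le> sz t \<and> (0 < sz t \<longrightarrow> sz t' < sz t))
  \<Longrightarrow> (k0, t0) \<in> set P \<Longrightarrow> 0 < sz t0 \<Longrightarrow> msr (lift f P) < msr P"
proof (induction P)
  case (Cons a P)
  obtain k t where a: "a = (k, t)" by (cases a)
  have le: "msr (lift f P) \<le> msr P"
  proof (rule msr_lift_le)
    fix k t t' assume "(k, t) \<in> set P" "f t = Some t'"
    then show "sz t' \<le> sz t" using Cons.prems(1)[of k t t'] by auto
  qed
  show ?case
  proof (cases "(k0, t0) = a")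
    case True
    then show ?thesis using Cons.prems a le by (fastforce simp: msr_alt split: option.splits)
  next
    case False
    have pr: "\<And>k t t'. (k, t) \<in> set P \<Longrightarrow> f t = Some t' \<Longrightarrow> sz t' \<le> sz t \<and> (0 < sz t \<longrightarrow> sz t' < sz t)"
      using Cons.prems(1) by (meson list.set_intros(2))
    have "(k0, t0) \<in> set P" using False Cons.prems(2) by auto
    then have "msr (lift f P) < msr P"
      apply (rule Cons.IH[rotated])
       apply (rule Cons.prems(3))
      by (rule pr)
    then show ?thesis using Cons.prems a by (fastforce simp: msr_alt split: option.splits)
  qed
qed simp

definition degt :: "('v,'e) tri \<Rightarrow> int" where "degt t = (case t of (u, as, bs) \<Rightarrow> int (length as) - int (length bs))"

context cohn begin

declare valid.simps[simp del]

definition validP :: "('k \<times> ('v,'e) tri) list \<Rightarrow> bool" where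
  "validP P \<longleftrightarrow> (\<forall>k t. (k, t) \<in> set P \<longrightarrow> valid t)"

lemma validP_lift: "validP P \<Longrightarrow> (\<And>t t'. valid t \<Longrightarrow> f t = Some t' \<Longrightarrow> valid t') \<Longrightarrow> validP (lift f P)"
proof -
  assume a: "validP P" "\<And>t t'. valid t \<Longrightarrow> f t = Some t' \<Longrightarrow> valid t'"
  show ?thesis unfolding validP_def
  proof (intro allI impI)
    fix k t' assume "(k, t') \<in> set (lift f P)"
    then obtain t where "(k, t) \<in> set P" "f t = Some t'" using lift_set by metis
    then show "valid t'" using a unfolding validP_def by metis
  qed
qed

lemma ev_lift_cg_L: "validP P \<Longrightarrow> g \<in> GG \<Longrightarrow> cg (lmul [g] (ev P)) (ev (lift (Lt g) P) :: _ \<Rightarrow> 'k::field)"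
proof (induction P)
  case Nil then show ?case by (simp only: ev_def evh_Nil lmul_zero rmul_zero lift_Nil cg_refl)
next
  case (Cons a P)
  obtain k t where a: "a = (k, t)" by (cases a)
  have v: "valid t" "validP P" using Cons.prems(1) a unfolding validP_def by (metis list.set_intros(1), metis list.set_intros(2))
  have "cg (smul k (wmono (g # nw t)) + lmul [g] (ev P)) (smul k (evo (Lt g t)) + ev (lift (Lt g) P) :: _ \<Rightarrow> 'k)"
    by (rule cg_add[OF cg_smul[OF Lt_cg[OF v(1) Cons.prems(2)]] Cons.IH[OF v(2) Cons.prems(2)]])
  then have "cg (lmul [g] (smul k (wmono (nw t))) + lmul [g] (ev P)) (smul k (evo (Lt g t)) + ev (lift (Lt g) P) :: _ \<Rightarrow> 'k)"
    by (simp add: lmul_smul lmul_wmono del: plus_fun_apply)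
  moreover have "ev (lift (Lt g) (a # P)) = smul k (evo (Lt g t)) + ev (lift (Lt g) P)"
    unfolding a ev_lift by (simp only: evh_Cons)
  ultimately show ?case using a by (simp add: ev_def lmul_add del: plus_fun_apply)
qed

lemma ev_lift_cg_R: "validP P \<Longrightarrow> g \<in> GG \<Longrightarrow> cg (rmul (ev P) [g]) (ev (lift (Rt g) P) :: _ \<Rightarrow> 'k::field)"
proof (induction P)
  case Nil then show ?case by (simp only: ev_def evh_Nil lmul_zero rmul_zero lift_Nil cg_refl)
next
  case (Cons a P)
  obtain k t where a: "a = (k, t)" by (cases a)
  have v: "valid t" "validP P" using Cons.prems(1) a unfolding validP_def by (metis list.set_intros(1), metis list.set_intros(2))
  have "cg (smul k (wmono (nw t @ [g])) + rmul (ev P) [g]) (smul k (evo (Rt g t)) + ev (lift (Rt g) P) :: _ \<Rightarrow> 'k)"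
    by (rule cg_add[OF cg_smul[OF Rt_cg[OF v(1) Cons.prems(2)]] Cons.IH[OF v(2) Cons.prems(2)]])
  then have "cg (rmul (smul k (wmono (nw t))) [g] + rmul (ev P) [g]) (smul k (evo (Rt g t)) + ev (lift (Rt g) P) :: _ \<Rightarrow> 'k)"
    by (simp add: rmul_smul rmul_wmono del: plus_fun_apply)
  moreover have "ev (lift (Rt g) (a # P)) = smul k (evo (Rt g t)) + ev (lift (Rt g) P)"
    unfolding a ev_lift by (simp only: evh_Cons)
  ultimately show ?case using a by (simp add: ev_def rmul_add del: plus_fun_apply)
qed

end

context cohn begin

definition pig :: "('v,'e) gen \<Rightarrow> ('v \<times> 'e list \<Rightarrow> 'k::field) \<Rightarrow> ('v \<times> 'e list \<Rightarrow> 'k)" where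
  "pig g \<phi> = (case g of
      V x \<Rightarrow> (\<lambda>(v, es). if v = x then \<phi> (v, es) else 0)
    | Ed e \<Rightarrow> (\<lambda>(v, es). if es \<noteq> [] \<and> hd es = e \<and> v = s e then \<phi> (r e, tl es) else 0)
    | Gh e \<Rightarrow> (\<lambda>(v, es). if v = r e then \<phi> (s e, e # es) else 0))"

fun piw :: "('v,'e) gen list \<Rightarrow> ('v \<times> 'e list \<Rightarrow> 'k::field) \<Rightarrow> ('v \<times> 'e list \<Rightarrow> 'k)" where
  "piw [] \<phi> = \<phi>" | "piw (g # w) \<phi> = pig g (piw w \<phi>)"

lemma piw_append: "piw (u @ w) \<phi> = piw u (piw w \<phi>)"
  by (induction u) auto

lemma sum_if_zero: "(\<Sum>x\<in>A. c x * (if C then f x else 0)) = (if C then \<Sum>x\<in>A. c x * f x else (0::'k::field))"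
  by (cases C) auto

lemma pig_lin: "pig g (\<lambda>p. \<Sum>x\<in>A. c x * \<psi> x p) = (\<lambda>p. \<Sum>x\<in>A. c x * pig g (\<psi> x) p)"
proof (rule ext)
  fix p :: "'v \<times> 'e list"
  obtain v es where p: "p = (v, es)" by (cases p)
  show "pig g (\<lambda>p. \<Sum>x\<in>A. c x * \<psi> x p) p = (\<Sum>x\<in>A. c x * pig g (\<psi> x) p)"
    unfolding p by (cases g) (simp_all only: pig_def gen.case prod.case sum_if_zero)
qed

lemma piw_lin: "piw u (\<lambda>p. \<Sum>x\<in>A. c x * \<psi> x p) = (\<lambda>p. \<Sum>x\<in>A. c x * piw u (\<psi> x) p)"
proof (induction u)
  case (Cons g u)
  then show ?case by (simp add: pig_lin)
qed simp

definition TT :: "(('v,'e) gen list \<Rightarrow> 'k::field) \<Rightarrow> ('v \<times> 'e list \<Rightarrow> 'k) \<Rightarrow> ('v \<times> 'e list \<Rightarrow> 'k)" where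
  "TT x \<phi> = (\<lambda>p. \<Sum>w\<in>{w. x w \<noteq> 0}. x w * piw w \<phi> p)"

lemma TT_set: "finite A \<Longrightarrow> {w. x w \<noteq> 0} \<subseteq> A \<Longrightarrow> TT x \<phi> p = (\<Sum>w\<in>A. x w * piw w \<phi> p)"
  unfolding TT_def by (rule sum.mono_neutral_left) auto

fun vp :: "'v \<times> 'e list \<Rightarrow> bool" where
  "vp (v, es) \<longleftrightarrow> v \<in> E0 \<and> set es \<subseteq> E1 \<and> chain es \<and> (es \<noteq> [] \<longrightarrow> s (hd es) = v)"

fun rp :: "'v \<times> 'e list \<Rightarrow> 'v" where
  "rp (v, es) = (if es = [] then v else r (last es))"

declare vp.simps[simp del] rp.simps[simp del]

definition SS :: "('v \<times> 'e list \<Rightarrow> 'k::field) set" where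
  "SS = {\<phi>. finite {p. vp p \<and> \<phi> p \<noteq> 0} \<and> (\<forall>p. vp p \<and> \<phi> p \<noteq> 0 \<longrightarrow> rp p \<in> X)}"

lemma SS_zero: "(\<lambda>p. 0) \<in> SS" by (simp add: SS_def)

lemma SS_add: "\<phi> \<in> SS \<Longrightarrow> \<psi> \<in> SS \<Longrightarrow> (\<lambda>p. \<phi> p + \<psi> p) \<in> SS"
proof -
  assume a: "\<phi> \<in> SS" "\<psi> \<in> SS"
  have "{p. vp p \<and> \<phi> p + \<psi> p \<noteq> 0} \<subseteq> {p. vp p \<and> \<phi> p \<noteq> 0} \<union> {p. vp p \<and> \<psi> p \<noteq> 0}" by auto
  then have "finite {p. vp p \<and> \<phi> p + \<psi> p \<noteq> 0}" using a unfolding SS_def by (auto intro: finite_subset)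
  moreover have "rp p \<in> X" if "vp p" "\<phi> p + \<psi> p \<noteq> 0" for p
  proof -
    have "\<phi> p \<noteq> 0 \<or> \<psi> p \<noteq> 0" using that(2) by auto
    then show ?thesis using a that(1) unfolding SS_def by blast
  qed
  ultimately show ?thesis unfolding SS_def by blast
qed

lemma SS_smul: "\<phi> \<in> SS \<Longrightarrow> (\<lambda>p. k * \<phi> p) \<in> SS"
proof -
  assume a: "\<phi> \<in> SS"
  have "{p. vp p \<and> k * \<phi> p \<noteq> 0} \<subseteq> {p. vp p \<and> \<phi> p \<noteq> 0}" by auto
  then show ?thesis using a unfolding SS_def by (auto intro: finite_subset)
qed

lemma SS_eqI: "\<phi> \<in> SS \<Longrightarrow> (\<And>p. vp p \<Longrightarrow> \<psi> p = \<phi> p) \<Longrightarrow> \<psi> \<in> SS"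
proof -
  assume a: "\<phi> \<in> SS" "\<And>p. vp p \<Longrightarrow> \<psi> p = \<phi> p"
  then have eq: "{p. vp p \<and> \<psi> p \<noteq> 0} = {p. vp p \<and> \<phi> p \<noteq> 0}" by auto
  show ?thesis unfolding SS_def
  proof (intro CollectI conjI allI impI)
    show "finite {p. vp p \<and> \<psi> p \<noteq> 0}" using eq a(1) unfolding SS_def by simp
  next
    fix p assume "vp p \<and> \<psi> p \<noteq> 0"
    then have "vp p \<and> \<phi> p \<noteq> 0" using a(2)[of p] by simp
    then show "rp p \<in> X" using a(1) unfolding SS_def by blast
  qed
qed

lemma vp_Cons: "e \<in> E1 \<Longrightarrow> vp (s e, e # es) \<longleftrightarrow> vp (r e, es)"
  by (auto simp: vp.simps chain_Cons)
lemma rp_Cons: "rp (s e, e # es) = rp (r e, es)"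
  by (cases es) (auto simp: rp.simps)

lemma pig_V: "pig (V x) \<phi> p \<noteq> 0 \<Longrightarrow> \<phi> p \<noteq> 0"
  by (cases p) (auto simp: pig_def split: if_splits)
lemma pig_Ed: "pig (Ed e) \<phi> (v, es) \<noteq> 0 \<Longrightarrow> \<exists>es'. es = e # es' \<and> v = s e \<and> \<phi> (r e, es') \<noteq> 0"
  by (cases es) (auto simp: pig_def split: if_splits)
lemma pig_Gh: "pig (Gh e) \<phi> (v, es) \<noteq> 0 \<Longrightarrow> v = r e \<and> \<phi> (s e, e # es) \<noteq> 0"
  by (auto simp: pig_def split: if_splits)

lemma SS_I: "finite {p. vp p \<and> \<psi> p \<noteq> 0} \<Longrightarrow> (\<And>p. vp p \<Longrightarrow> \<psi> p \<noteq> 0 \<Longrightarrow> rp p \<in> X) \<Longrightarrow> \<psi> \<in> SS"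
  unfolding SS_def by blast
lemma SS_D: "\<phi> \<in> SS \<Longrightarrow> finite {p. vp p \<and> \<phi> p \<noteq> 0}" "\<phi> \<in> SS \<Longrightarrow> vp p \<Longrightarrow> \<phi> p \<noteq> 0 \<Longrightarrow> rp p \<in> X"
  unfolding SS_def by blast+

lemma pig_SS: assumes "g \<in> GG" "\<phi> \<in> SS" shows "pig g \<phi> \<in> SS"
proof (cases g)
  case (V x)
  have "{p. vp p \<and> pig g \<phi> p \<noteq> 0} \<subseteq> {p. vp p \<and> \<phi> p \<noteq> 0}" using V pig_V by blast
  then show ?thesis using SS_D[OF assms(2)] V pig_V
    by (intro SS_I) (auto intro: finite_subset)
next
  case (Ed e)
  have e: "e \<in> E1" using assms Ed by simp
  have key: "\<exists>es'. p = (s e, e # es') \<and> vp (r e, es') \<and> \<phi> (r e, es') \<noteq> 0 \<and> rp p = rp (r e, es')"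
    if vpp: "vp p" and nz: "pig g \<phi> p \<noteq> 0" for p
  proof -
    obtain v es where pv: "p = (v, es)" by (cases p)
    obtain es' where es: "es = e # es'" "v = s e" "\<phi> (r e, es') \<noteq> 0" using pig_Ed nz pv Ed by blast
    then show ?thesis using vpp pv vp_Cons[OF e] rp_Cons by auto
  qed
  have "{p. vp p \<and> pig g \<phi> p \<noteq> 0} \<subseteq> (\<lambda>(v, es). (s e, e # es)) ` {p. vp p \<and> \<phi> p \<noteq> 0}"
    using key by fastforce
  then have "finite {p. vp p \<and> pig g \<phi> p \<noteq> 0}" using SS_D(1)[OF assms(2)] by (auto intro: finite_subset)
  then show ?thesis using key SS_D(2)[OF assms(2)] by (intro SS_I) metis+
next
  case (Gh e)
  have e: "e \<in> E1" using assms Gh by simp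
  have key: "p = (r e, snd p) \<and> vp (s e, e # snd p) \<and> \<phi> (s e, e # snd p) \<noteq> 0 \<and> rp p = rp (s e, e # snd p)"
    if vpp: "vp p" and nz: "pig g \<phi> p \<noteq> 0" for p
  proof -
    obtain v es where pv: "p = (v, es)" by (cases p)
    then have "v = r e" "\<phi> (s e, e # es) \<noteq> 0" using pig_Gh nz Gh by blast+
    then show ?thesis using vpp pv vp_Cons[OF e] rp_Cons by auto
  qed
  have "{p. vp p \<and> pig g \<phi> p \<noteq> 0} \<subseteq> (\<lambda>(v, es). (r e, tl es)) ` {p. vp p \<and> \<phi> p \<noteq> 0}"
  proof
    fix p assume "p \<in> {p. vp p \<and> pig g \<phi> p \<noteq> 0}"
    then have k: "p = (r e, snd p) \<and> vp (s e, e # snd p) \<and> \<phi> (s e, e # snd p) \<noteq> 0" using key by blast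
    then show "p \<in> (\<lambda>(v, es). (r e, tl es)) ` {p. vp p \<and> \<phi> p \<noteq> 0}"
      by (intro image_eqI[of _ _ "(s e, e # snd p)"]) auto
  qed
  then have "finite {p. vp p \<and> pig g \<phi> p \<noteq> 0}" using SS_D(1)[OF assms(2)] by (auto intro: finite_subset)
  then show ?thesis using key SS_D(2)[OF assms(2)] by (intro SS_I) metis+
qed

lemma piw_SS: "set u \<subseteq> GG \<Longrightarrow> \<phi> \<in> SS \<Longrightarrow> piw u \<phi> \<in> SS"
  by (induction u) (auto intro: pig_SS)

end

context cohn begin

lemma TT_wmono: "TT (wmono w) \<phi> = piw w \<phi>"
proof
  fix p
  have "TT (wmono w) \<phi> p = (\<Sum>x\<in>{w}. wmono w x * piw x \<phi> p)"
    by (rule TT_set) (auto simp: wmono_def)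
  then show "TT (wmono w) \<phi> p = piw w \<phi> p" by (simp add: wmono_def)
qed

lemma TT_add: "finite {w. x w \<noteq> 0} \<Longrightarrow> finite {w. y w \<noteq> 0} \<Longrightarrow> TT (x + y) \<phi> = (\<lambda>p. TT x \<phi> p + TT y \<phi> p)"
proof
  fix p assume f: "finite {w. x w \<noteq> 0}" "finite {w. y w \<noteq> 0}"
  let ?A = "{w. x w \<noteq> 0} \<union> {w. y w \<noteq> 0}"
  have "TT (x + y) \<phi> p = (\<Sum>w\<in>?A. (x + y) w * piw w \<phi> p)" by (rule TT_set) (use f in auto)
  also have "\<dots> = (\<Sum>w\<in>?A. x w * piw w \<phi> p) + (\<Sum>w\<in>?A. y w * piw w \<phi> p)"
    by (simp add: distrib_right sum.distrib)
  also have "\<dots> = TT x \<phi> p + TT y \<phi> p"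
  proof -
    have "TT x \<phi> p = (\<Sum>w\<in>?A. x w * piw w \<phi> p)" by (rule TT_set) (use f in auto)
    moreover have "TT y \<phi> p = (\<Sum>w\<in>?A. y w * piw w \<phi> p)" by (rule TT_set) (use f in auto)
    ultimately show ?thesis by simp
  qed
  finally show "TT (x + y) \<phi> p = TT x \<phi> p + TT y \<phi> p" .
qed

lemma TT_smul: "finite {w. x w \<noteq> 0} \<Longrightarrow> TT (smul k x) \<phi> = (\<lambda>p. k * TT x \<phi> p)"
proof
  fix p assume f: "finite {w. x w \<noteq> 0}"
  have "TT (smul k x) \<phi> p = (\<Sum>w\<in>{w. x w \<noteq> 0}. smul k x w * piw w \<phi> p)" by (rule TT_set) (use f in \<open>auto simp: smul_def\<close>)
  also have "\<dots> = k * TT x \<phi> p" by (simp add: TT_def smul_def sum_distrib_left mult.assoc)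
  finally show "TT (smul k x) \<phi> p = k * TT x \<phi> p" .
qed

lemma TT_diff: "finite {w. x w \<noteq> 0} \<Longrightarrow> finite {w. y w \<noteq> 0} \<Longrightarrow> TT (x - y) \<phi> = (\<lambda>p. TT x \<phi> p - TT y \<phi> p)"
proof -
  assume f: "finite {w. x w \<noteq> 0}" "finite {w. y w \<noteq> 0}"
  have e: "x - y = x + smul (-1) y" by (auto simp: smul_def fun_eq_iff)
  have f2: "finite {w. smul (-1) y w \<noteq> 0}" using f(2) by (simp add: smul_def)
  have "TT (x - y) \<phi> = TT (x + smul (-1) y) \<phi>" by (simp only: e)
  also have "\<dots> = (\<lambda>p. TT x \<phi> p + TT (smul (-1) y) \<phi> p)" by (rule TT_add[OF f(1) f2])
  also have "\<dots> = (\<lambda>p. TT x \<phi> p - TT y \<phi> p)" by (simp add: TT_smul[OF f(2)])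
  finally show ?thesis .
qed

lemma TT_sum: "finite A \<Longrightarrow> (\<And>i. i \<in> A \<Longrightarrow> finite {w. F i w \<noteq> 0}) \<Longrightarrow> TT (sum F A) \<phi> = (\<lambda>p. \<Sum>i\<in>A. TT (F i) \<phi> p)"
proof (induction A rule: finite_induct)
  case empty then show ?case by (simp add: TT_def)
next
  case (insert i A)
  have "finite {w. sum F A w \<noteq> 0}"
  proof (rule finite_subset)
    show "{w. sum F A w \<noteq> 0} \<subseteq> (\<Union>i\<in>A. {w. F i w \<noteq> 0})"
      by (auto simp: sum_fun_apply dest: sum.not_neutral_contains_not_neutral)
  qed (use insert in auto)
  then show ?case using insert by (simp add: TT_add del: plus_fun_apply)
qed

lemma supp_rl: "{w. rmul (lmul u \<rho>) v w \<noteq> 0} = (\<lambda>x. u @ x @ v) ` {x. \<rho> x \<noteq> 0}"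
proof (rule set_eqI)
  fix w
  show "w \<in> {w. rmul (lmul u \<rho>) v w \<noteq> 0} \<longleftrightarrow> w \<in> (\<lambda>x. u @ x @ v) ` {x. \<rho> x \<noteq> 0}"
  proof
    assume "w \<in> {w. rmul (lmul u \<rho>) v w \<noteq> 0}"
    then have nz: "rmul (lmul u \<rho>) v w \<noteq> 0" by simp
    have "\<exists>y. w = y @ v"
    proof (rule ccontr)
      assume "\<not> (\<exists>y. w = y @ v)"
      then have "rmul (lmul u \<rho>) v w = 0" by (simp add: rmul_formula)
      then show False using nz by simp
    qed
    then obtain y where y: "w = y @ v" by blast
    then have ny: "lmul u \<rho> y \<noteq> 0" using nz rmul_app[of "lmul u \<rho>" v y] by simp
    have "\<exists>x. y = u @ x"
    proof (rule ccontr)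
      assume "\<not> (\<exists>x. y = u @ x)"
      then have "lmul u \<rho> y = 0" by (simp add: lmul_formula)
      then show False using ny by simp
    qed
    then obtain x where x: "y = u @ x" by blast
    then have "\<rho> x \<noteq> 0" using ny lmul_app[of u \<rho> x] by simp
    then show "w \<in> (\<lambda>x. u @ x @ v) ` {x. \<rho> x \<noteq> 0}" using x y by auto
  next
    assume "w \<in> (\<lambda>x. u @ x @ v) ` {x. \<rho> x \<noteq> 0}"
    then obtain x where "w = u @ x @ v" "\<rho> x \<noteq> 0" by auto
    moreover have "rmul (lmul u \<rho>) v (u @ x @ v) = \<rho> x"
      using rmul_app[of "lmul u \<rho>" v "u @ x"] lmul_app[of u \<rho> x] by simp
    ultimately show "w \<in> {w. rmul (lmul u \<rho>) v w \<noteq> 0}" by simp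
  qed
qed

lemma TT_gen: assumes f: "finite {x. \<rho> x \<noteq> 0}"
  shows "TT (rmul (lmul u \<rho>) v) \<phi> = piw u (TT \<rho> (piw v \<phi>))"
proof
  fix p
  have inj: "inj (\<lambda>x. u @ x @ v)" by (auto simp: inj_def)
  have "TT (rmul (lmul u \<rho>) v) \<phi> p = (\<Sum>w\<in>(\<lambda>x. u @ x @ v) ` {x. \<rho> x \<noteq> 0}. rmul (lmul u \<rho>) v w * piw w \<phi> p)"
    unfolding TT_def supp_rl ..
  also have "\<dots> = (\<Sum>x\<in>{x. \<rho> x \<noteq> 0}. rmul (lmul u \<rho>) v (u @ x @ v) * piw (u @ x @ v) \<phi> p)"
    by (rule sum.reindex[OF inj_on_subset[OF inj], simplified])
  also have "\<dots> = (\<Sum>x\<in>{x. \<rho> x \<noteq> 0}. \<rho> x * piw u (piw x (piw v \<phi>)) p)"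
  proof (rule sum.cong)
    fix x
    have "rmul (lmul u \<rho>) v (u @ x @ v) = \<rho> x"
      using rmul_app[of "lmul u \<rho>" v "u @ x"] lmul_app[of u \<rho> x] by simp
    moreover have "piw (u @ x @ v) \<phi> = piw u (piw x (piw v \<phi>))" by (simp only: piw_append)
    ultimately show "rmul (lmul u \<rho>) v (u @ x @ v) * piw (u @ x @ v) \<phi> p = \<rho> x * piw u (piw x (piw v \<phi>)) p"
      by simp
  qed simp
  also have "\<dots> = piw u (TT \<rho> (piw v \<phi>)) p"
    unfolding TT_def piw_lin by simp
  finally show "TT (rmul (lmul u \<rho>) v) \<phi> p = piw u (TT \<rho> (piw v \<phi>)) p" .
qed

end

context cohn begin

lemma fin_wmono: "finite {w. wmono x w \<noteq> (0::'k::field)}"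
  by (rule finite_subset[of _ "{x}"]) (auto simp: wmono_def)

lemma TT_fsub_w: "TT (fsub (wmono x) (wmono y) :: _ \<Rightarrow> 'k::field) \<psi> = (\<lambda>p. piw x \<psi> p - piw y \<psi> p)"
  by (simp only: fsub_eq TT_diff[OF fin_wmono fin_wmono] TT_wmono)

lemma TT_fsub_0: "TT (fsub (wmono x) fzero :: _ \<Rightarrow> 'k::field) \<psi> = piw x \<psi>"
  by (simp add: fsub_eq fzero_eq TT_wmono)

lemma fin_fsub_w: "finite {w. fsub (wmono x) (wmono y) w \<noteq> (0::'k::field)}"
  by (rule finite_subset[of _ "{x, y}"]) (auto simp: wmono_def fsub_def)
lemma fin_fsub_0: "finite {w. fsub (wmono x) fzero w \<noteq> (0::'k::field)}"
  by (rule finite_subset[of _ "{x}"]) (auto simp: wmono_def fsub_def fzero_def)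

lemma SS_zero': "(\<And>p. \<psi> p = 0) \<Longrightarrow> \<psi> \<in> SS"
  using SS_eqI[OF SS_zero] by metis

lemma piw_e1: "piw [V a, V b] \<psi> p = (if a = b then piw [V a] \<psi> p else (0::'k::field))"
  by (cases p) (simp add: pig_def)
lemma piw_e2: "piw [V (s e), Ed e] \<psi> p = (piw [Ed e] \<psi> p :: 'k::field)"
  by (cases p) (simp add: pig_def)
lemma piw_e3: "piw [Ed e, V (r e)] \<psi> p = (piw [Ed e] \<psi> p :: 'k::field)"
  by (cases p) (simp add: pig_def)
lemma piw_e4: "piw [V (r e), Gh e] \<psi> p = (piw [Gh e] \<psi> p :: 'k::field)"
  by (cases p) (simp add: pig_def)
lemma piw_e5: "piw [Gh e, V (s e)] \<psi> p = (piw [Gh e] \<psi> p :: 'k::field)"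
  by (cases p) (simp add: pig_def)
lemma piw_e6: "piw [Gh e, Ed f] \<psi> p = (if e = f then piw [V (r e)] \<psi> p else (0::'k::field))"
  by (cases p) (auto simp: pig_def)
lemma piw_e7: "piw [Ed e, Gh e] \<psi> (x, es) = (if es \<noteq> [] \<and> hd es = e \<and> x = s e then \<psi> (x, es) else (0::'k::field))"
  by (cases es) (auto simp: pig_def)

lemma pig_EG: "pig (Ed e) (pig (Gh e) \<psi>) (x, es) = (if es \<noteq> [] \<and> hd es = e \<and> x = s e then \<psi> (x, es) else (0::'k::field))"
  by (cases es) (auto simp: pig_def)
lemma pig_V_eq: "pig (V v) \<psi> (x, es) = (if x = v then \<psi> (x, es) else (0::'k::field))"
  by (simp add: pig_def)

lemma rel_w_ok: "(\<And>\<psi> p. piw x \<psi> p = (piw y \<psi> p :: 'k::field)) \<Longrightarrow>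
   finite {w. fsub (wmono x) (wmono y) w \<noteq> (0::'k)} \<and> (\<forall>\<psi>. TT (fsub (wmono x) (wmono y) :: _ \<Rightarrow> 'k) \<psi> \<in> SS)"
  using fin_fsub_w by (auto simp: TT_fsub_w intro!: SS_zero')

lemma rel_0_ok: "(\<And>\<psi> p. piw x \<psi> p = (0 :: 'k::field)) \<Longrightarrow>
   finite {w. fsub (wmono x) fzero w \<noteq> (0::'k)} \<and> (\<forall>\<psi>. TT (fsub (wmono x) fzero :: _ \<Rightarrow> 'k) \<psi> \<in> SS)"
  using fin_fsub_0 by (auto simp: TT_fsub_0 intro!: SS_zero')

lemma rels_ok: assumes "\<rho> \<in> cohn_rels E0 E1 r s X"
  shows "finite {w. \<rho> w \<noteq> (0::'k::field)} \<and> (\<forall>\<psi>. TT \<rho> \<psi> \<in> SS)"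
  using assms unfolding cohn_rels_def
proof (elim UnE CollectE exE conjE)
  fix v w assume \<rho>: "\<rho> = fsub (wmono [V v, V w]) (if v = w then wmono [V v] else fzero)"
  show ?thesis
  proof (cases "v = w")
    case True
    have e: "(if v = w then wmono [V v] else fzero) = (wmono [V w] :: _ \<Rightarrow> 'k)" using True by simp
    show ?thesis unfolding \<rho> e unfolding True by (rule rel_w_ok) (use piw_e1[of w w] in simp)
  next
    case False
    have e: "(if v = w then wmono [V v] else fzero) = (fzero :: _ \<Rightarrow> 'k)" using False by simp
    show ?thesis unfolding \<rho> e by (rule rel_0_ok) (use piw_e1[of v w] False in simp)
  qed
next
  fix e assume \<rho>: "\<rho> = fsub (wmono [V (s e), Ed e]) (wmono [Ed e])"
  show ?thesis unfolding \<rho> by (rule rel_w_ok) (simp only: piw_e2)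
next
  fix e assume \<rho>: "\<rho> = fsub (wmono [Ed e, V (r e)]) (wmono [Ed e])"
  show ?thesis unfolding \<rho> by (rule rel_w_ok) (simp only: piw_e3)
next
  fix e assume \<rho>: "\<rho> = fsub (wmono [V (r e), Gh e]) (wmono [Gh e])"
  show ?thesis unfolding \<rho> by (rule rel_w_ok) (simp only: piw_e4)
next
  fix e assume \<rho>: "\<rho> = fsub (wmono [Gh e, V (s e)]) (wmono [Gh e])"
  show ?thesis unfolding \<rho> by (rule rel_w_ok) (simp only: piw_e5)
next
  fix e f assume \<rho>: "\<rho> = fsub (wmono [Gh e, Ed f]) (if e = f then wmono [V (r e)] else fzero)"
  show ?thesis
  proof (cases "e = f")
    case True
    have e: "(if e = f then wmono [V (r e)] else fzero) = (wmono [V (r e)] :: _ \<Rightarrow> 'k)" using True by simp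
    show ?thesis unfolding \<rho> e unfolding True by (rule rel_w_ok) (use piw_e6[of f f] in simp)
  next
    case False
    have e: "(if e = f then wmono [V (r e)] else fzero) = (fzero :: _ \<Rightarrow> 'k)" using False by simp
    show ?thesis unfolding \<rho> e by (rule rel_0_ok) (use piw_e6[of e f] False in simp)
  qed
next
  fix v assume \<rho>: "\<rho> = gap E1 s v" and vX: "v \<in> X"
  define Sv where "Sv = {e \<in> E1. s e = v}"
  have finS: "finite Sv" using vX XReg unfolding Sv_def Reg_def by auto
  have geq: "gap E1 s v = (wmono [V v] - sum (\<lambda>e. wmono [Ed e, Gh e]) Sv :: _ \<Rightarrow> 'k)"
    unfolding gap_def Sv_def by (simp add: fsub_eq fsum_eq)
  have fsum: "finite {w. sum (\<lambda>e. wmono [Ed e, Gh e]) Sv w \<noteq> (0::'k)}"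
  proof (rule finite_subset)
    show "{w. sum (\<lambda>e. wmono [Ed e, Gh e]) Sv w \<noteq> (0::'k)} \<subseteq> (\<lambda>e. [Ed e, Gh e]) ` Sv"
    proof
      fix w assume "w \<in> {w. sum (\<lambda>e. wmono [Ed e, Gh e]) Sv w \<noteq> (0::'k)}"
      then have "(\<Sum>e\<in>Sv. (wmono [Ed e, Gh e] w :: 'k)) \<noteq> 0" by (simp add: sum_fun_apply)
      then obtain e where "e \<in> Sv" "(wmono [Ed e, Gh e] w :: 'k) \<noteq> 0" by (meson sum.not_neutral_contains_not_neutral)
      then show "w \<in> (\<lambda>e. [Ed e, Gh e]) ` Sv" by (auto simp: wmono_def split: if_splits)
    qed
  qed (use finS in simp)
  have fin: "finite {w. \<rho> w \<noteq> (0::'k)}"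
  proof (rule finite_subset)
    show "{w. \<rho> w \<noteq> (0::'k)} \<subseteq> {w. wmono [V v] w \<noteq> (0::'k)} \<union> {w. sum (\<lambda>e. wmono [Ed e, Gh e]) Sv w \<noteq> (0::'k)}"
    proof
      fix w assume "w \<in> {w. \<rho> w \<noteq> (0::'k)}"
      then have "wmono [V v] w - sum (\<lambda>e. wmono [Ed e, Gh e]) Sv w \<noteq> (0::'k)" unfolding \<rho> geq by simp
      then show "w \<in> {w. wmono [V v] w \<noteq> (0::'k)} \<union> {w. sum (\<lambda>e. wmono [Ed e, Gh e]) Sv w \<noteq> (0::'k)}"
        by auto
    qed
  qed (rule finite_UnI[OF fin_wmono fsum])
  have TTeq: "TT \<rho> \<psi> = (\<lambda>p. piw [V v] \<psi> p - (\<Sum>e\<in>Sv. piw [Ed e, Gh e] \<psi> p))" for \<psi> :: "_ \<Rightarrow> 'k"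
    unfolding \<rho> geq by (simp add: TT_diff[OF fin_wmono fsum] TT_sum[OF finS] fin_wmono TT_wmono)
  have "TT \<rho> \<psi> \<in> SS" for \<psi> :: "_ \<Rightarrow> 'k"
  proof (rule SS_I)
    have z: "TT \<rho> \<psi> p = 0" if "vp p" "p \<noteq> (v, [])" for p
    proof -
      obtain x es where p: "p = (x, es)" by (cases p)
      have vpp: "x \<in> E0" "set es \<subseteq> E1" "es \<noteq> [] \<longrightarrow> s (hd es) = x" using that(1) p by (auto simp: vp.simps)
      have T: "TT \<rho> \<psi> p = pig (V v) \<psi> (x, es) - (\<Sum>e\<in>Sv. pig (Ed e) (pig (Gh e) \<psi>) (x, es))"
        unfolding TTeq p by simp
      show ?thesis
      proof (cases "x = v")
        case False
        have "(\<Sum>e\<in>Sv. pig (Ed e) (pig (Gh e) \<psi>) (x, es)) = 0"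
        proof (rule sum.neutral, rule ballI)
          fix e assume "e \<in> Sv"
          then have "s e = v" unfolding Sv_def by simp
          then show "pig (Ed e) (pig (Gh e) \<psi>) (x, es) = 0" using False by (simp only: pig_EG) simp
        qed
        moreover have "pig (V v) \<psi> (x, es) = 0" using False by (simp only: pig_V_eq) simp
        ultimately show ?thesis using T by simp
      next
        case True
        then have ne: "es \<noteq> []" using that(2) p by auto
        then have hS: "hd es \<in> Sv" using vpp True unfolding Sv_def by auto
        have "(\<Sum>e\<in>Sv. pig (Ed e) (pig (Gh e) \<psi>) (x, es)) = (\<Sum>e\<in>Sv. if e = hd es then \<psi> (x, es) else 0)"
        proof (rule sum.cong)
          fix e assume "e \<in> Sv"
          then have "s e = v" unfolding Sv_def by simp
          then show "pig (Ed e) (pig (Gh e) \<psi>) (x, es) = (if e = hd es then \<psi> (x, es) else 0)"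
            using ne True by (simp only: pig_EG) auto
        qed simp
        also have "\<dots> = \<psi> (x, es)" using finS hS by simp
        finally show ?thesis using T True by (simp only: pig_V_eq) simp
      qed
    qed
    show "finite {p. vp p \<and> TT \<rho> \<psi> p \<noteq> 0}"
      by (rule finite_subset[of _ "{(v, [])}"]) (use z in auto)
    fix p assume "vp p" "TT \<rho> \<psi> p \<noteq> 0"
    then have "p = (v, [])" using z by blast
    then show "rp p \<in> X" using vX by (simp add: rp.simps)
  qed
  then show ?thesis using fin by blast
qed

end

context cohn begin

lemma II_rep: "x \<in> II \<Longrightarrow> finite {w. x w \<noteq> (0::'k::field)} \<and> (\<forall>\<phi>. TT x \<phi> \<in> SS)"
  unfolding II_def cohn_ideal_def
proof (induction rule: gen_ideal.induct)
  case (gen \<rho> u v)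
  have e: "fmul (fmul (wmono u) \<rho>) (wmono v) = rmul (lmul u \<rho>) v" by (simp add: lmul_def rmul_def)
  have r: "finite {w. \<rho> w \<noteq> 0}" "\<And>\<psi>. TT \<rho> \<psi> \<in> SS" using rels_ok[OF gen(1)] by auto
  have "finite {w. rmul (lmul u \<rho>) v w \<noteq> 0}" unfolding supp_rl using r(1) by simp
  moreover have "TT (rmul (lmul u \<rho>) v) \<phi> \<in> SS" for \<phi>
    unfolding TT_gen[OF r(1)] by (rule piw_SS[OF gen(2) r(2)])
  ultimately show ?case unfolding e by blast
next
  case zero
  have "TT fzero \<phi> = (\<lambda>p. 0)" for \<phi> :: "_ \<Rightarrow> 'k" by (simp add: TT_def fzero_def)
  then show ?case using SS_zero by (simp add: fzero_def)
next
  case (add a b)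
  have f: "finite {w. fadd a b w \<noteq> 0}"
    by (rule finite_subset[of _ "{w. a w \<noteq> 0} \<union> {w. b w \<noteq> 0}"]) (use add in \<open>auto simp: fadd_def\<close>)
  have "TT (fadd a b) \<phi> \<in> SS" for \<phi>
    unfolding fadd_eq TT_add[OF add.IH(1)[THEN conjunct1] add.IH(2)[THEN conjunct1]]
    by (rule SS_add) (use add.IH in auto)
  then show ?case using f by blast
next
  case (smul a k)
  have f: "finite {w. smul k a w \<noteq> 0}"
    by (rule finite_subset[of _ "{w. a w \<noteq> 0}"]) (use smul in \<open>auto simp: smul_def\<close>)
  have "TT (smul k a) \<phi> \<in> SS" for \<phi>
    unfolding TT_smul[OF smul.IH[THEN conjunct1]] by (rule SS_smul) (use smul.IH in auto)
  then show ?case using f by blast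
qed

lemma vertex_notin': assumes u: "u \<in> E0" shows "(wmono [V u] :: _ \<Rightarrow> 'k::field) \<notin> II"
proof
  assume "(wmono [V u] :: _ \<Rightarrow> 'k) \<in> II"
  define \<phi> :: "'v \<times> 'e list \<Rightarrow> 'k" where "\<phi> = (\<lambda>(x, es). if x = u then 1 else 0)"
  have "TT (wmono [V u] :: _ \<Rightarrow> 'k) \<phi> \<in> SS" using II_rep[OF \<open>_ \<in> II\<close>] by blast
  moreover have "TT (wmono [V u] :: _ \<Rightarrow> 'k) \<phi> = \<phi>"
    unfolding TT_wmono by (auto simp: fun_eq_iff pig_def \<phi>_def)
  ultimately have phS: "\<phi> \<in> SS" by simp
  define M where "M = {p. vp p \<and> \<phi> p \<noteq> 0}"
  have finM: "finite M" using SS_D(1)[OF phS] unfolding M_def .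
  have u0: "(u, []) \<in> M" using u unfolding M_def \<phi>_def by (simp add: vp.simps)
  have Mu: "p \<in> M \<Longrightarrow> fst p = u \<and> vp p" for p unfolding M_def \<phi>_def by (cases p) (auto split: if_splits)
  define m where "m = Max ((\<lambda>p. length (snd p)) ` M)"
  have "m \<in> (\<lambda>p. length (snd p)) ` M" unfolding m_def by (rule Max_in) (use finM u0 in auto)
  then obtain p where pM: "p \<in> M" and pm: "length (snd p) = m" by auto
  obtain es where p: "p = (u, es)" using Mu[OF pM] by (cases p) auto
  have vpp: "vp (u, es)" using Mu[OF pM] p by simp
  have "rp p \<in> X" using SS_D(2)[OF phS] pM unfolding M_def by blast
  then have "rp p \<in> Reg E0 E1 s" using XReg by blast
  then obtain e where e: "e \<in> E1" "s e = rp p" unfolding Reg_def by blast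
  have "vp (u, es @ [e])"
  proof (cases "es = []")
    case True then show ?thesis using vpp e p by (simp add: vp.simps rp.simps)
  next
    case False then show ?thesis using vpp e p by (simp add: vp.simps rp.simps chain_app1 hd_append)
  qed
  then have "(u, es @ [e]) \<in> M" unfolding M_def \<phi>_def by simp
  then have "length (es @ [e]) \<le> m" unfolding m_def using finM by (intro Max_ge) force+
  then show False using pm p by simp
qed

end

lemma all_nat_split: "(\<forall>i::nat. Q i) \<longleftrightarrow> Q 0 \<and> (\<forall>j. Q (Suc j))"
  by (metis nat.exhaust)

lemma supp_decomp: "finite {w. a w \<noteq> 0} \<Longrightarrow> a = sum (\<lambda>w. smul (a w) (wmono w)) {w. a w \<noteq> 0}"
proof
  fix v assume fin: "finite {w. a w \<noteq> 0}"
  have "sum (\<lambda>w. smul (a w) (wmono w)) {w. a w \<noteq> 0} v = (\<Sum>w\<in>{w. a w \<noteq> 0}. if w = v then a v else 0)"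
    by (auto simp: sum_fun_apply smul_def wmono_def intro!: sum.cong)
  also have "\<dots> = a v" using fin by (auto simp: sum.delta')
  finally show "a v = sum (\<lambda>w. smul (a w) (wmono w)) {w. a w \<noteq> 0} v" by simp
qed

definition homP :: "int \<Rightarrow> ('k \<times> ('v,'e) tri) list \<Rightarrow> bool" where
  "homP n P \<longleftrightarrow> (\<forall>k t. (k, t) \<in> set P \<longrightarrow> degt t = n)"

lemma homP_lift: "homP n P \<Longrightarrow> (\<And>t t'. f t = Some t' \<Longrightarrow> degt t' = degt t + d) \<Longrightarrow> homP (n + d) (lift f P)"
  unfolding homP_def by (metis lift_set)

fun ws :: "'v + 'e list \<Rightarrow> ('v,'e) gen list" where
  "ws (Inl u) = [V u]" | "ws (Inr es) = rev (map Gh es)"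
fun wp :: "'v + 'e list \<Rightarrow> ('v,'e) gen list" where
  "wp (Inl u) = [V u]" | "wp (Inr es) = map Ed es"

lemma pth_star_ws: "pth_star p = wmono (ws p)" by (cases p) (auto simp: pth_star_def)
lemma pth_wp: "pth p = wmono (wp p)" by (cases p) (auto simp: pth_def)

fun ext :: "'v + 'e list \<Rightarrow> 'e \<Rightarrow> 'v + 'e list" where
  "ext (Inl u) e = Inr [e]" | "ext (Inr es) e = Inr (es @ [e])"

context cohn begin

lemma chain_nth: "chain es \<longleftrightarrow> (\<forall>i. Suc i < length es \<longrightarrow> r (es ! i) = s (es ! Suc i))"
proof (induction es rule: induct_list012)
  case (3 x y zs)
  show ?case
    apply (subst all_nat_split)
    using 3(2) by auto
qed auto

fun rpath :: "'v + 'e list \<Rightarrow> 'v" where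
  "rpath (Inl u) = u" | "rpath (Inr es) = r (last es)"

lemma is_path_Inl[simp]: "is_path E0 E1 r s (Inl u) \<longleftrightarrow> u \<in> E0" by (simp add: is_path_def)
lemma is_path_Inr[simp]: "is_path E0 E1 r s (Inr es) \<longleftrightarrow> es \<noteq> [] \<and> set es \<subseteq> E1 \<and> chain es"
  by (simp add: is_path_def chain_nth)

lemma rpath_E0: "is_path E0 E1 r s p \<Longrightarrow> rpath p \<in> E0"
  by (cases p) (auto intro!: re_E0 dest!: last_in_set)

lemma ext_path: "is_path E0 E1 r s p \<Longrightarrow> e \<in> E1 \<Longrightarrow> s e = rpath p \<Longrightarrow> is_path E0 E1 r s (ext p e) \<and> rpath (ext p e) = r e"
  by (cases p) (auto simp: chain_app1)

lemma ws_GG: "is_path E0 E1 r s p \<Longrightarrow> set (ws p) \<subseteq> GG" by (cases p) auto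
lemma wp_GG: "is_path E0 E1 r s p \<Longrightarrow> set (wp p) \<subseteq> GG" by (cases p) auto

context
  fixes a :: "('v,'e) gen list \<Rightarrow> 'k::field"
  assumes fa: "finite {w. a w \<noteq> 0}" "\<And>w. a w \<noteq> 0 \<Longrightarrow> set w \<subseteq> GG"
begin

definition B :: "'v + 'e list \<Rightarrow> 'v + 'e list \<Rightarrow> (('v,'e) gen list \<Rightarrow> 'k)" where
  "B \<mu> \<eta> = fmul (fmul (pth_star \<mu>) a) (pth \<eta>)"

lemma B_alt: "B \<mu> \<eta> = rmul (lmul (ws \<mu>) a) (wp \<eta>)"
  by (simp add: B_def pth_star_ws pth_wp lmul_def rmul_def)

lemma lmul_a: "lmul x a = sum (\<lambda>w. smul (a w) (wmono (x @ w))) {w. a w \<noteq> 0}"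
  by (subst supp_decomp[OF fa(1)]) (simp add: lmul_sum lmul_smul lmul_wmono)

lemma word_cg_l: assumes "cg (wmono x) (wmono y :: _ \<Rightarrow> 'k)" "set q \<subseteq> GG"
  shows "cg (rmul (lmul x a) q) (rmul (lmul y a) q)"
proof -
  have "cg (rmul (wmono (x @ w)) q) (rmul (wmono (y @ w)) q :: _ \<Rightarrow> 'k)" if "a w \<noteq> 0" for w
    using cg_rmul[OF cg_rmul[OF assms(1), of w]] fa(2)[OF that] assms(2) by (simp add: rmul_wmono)
  then have "cg (sum (\<lambda>w. smul (a w) (rmul (wmono (x @ w)) q)) {w. a w \<noteq> 0})
                 (sum (\<lambda>w. smul (a w) (rmul (wmono (y @ w)) q)) {w. a w \<noteq> 0})"
    by (intro cg_sum cg_smul) auto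
  then show ?thesis by (simp add: lmul_a rmul_sum rmul_smul)
qed

lemma word_cg_r: assumes "cg (wmono x) (wmono y :: _ \<Rightarrow> 'k)" "set p \<subseteq> GG"
  shows "cg (rmul (lmul p a) x) (rmul (lmul p a) y)"
proof -
  have "cg (lmul (p @ w) (wmono x)) (lmul (p @ w) (wmono y) :: _ \<Rightarrow> 'k)" if "a w \<noteq> 0" for w
    using cg_lmul[OF assms(1), of "p @ w"] fa(2)[OF that] assms(2) by simp
  then have "cg (sum (\<lambda>w. smul (a w) (lmul (p @ w) (wmono x))) {w. a w \<noteq> 0})
                 (sum (\<lambda>w. smul (a w) (lmul (p @ w) (wmono y))) {w. a w \<noteq> 0})"
    by (intro cg_sum cg_smul) auto
  then show ?thesis by (simp add: lmul_a rmul_sum rmul_smul lmul_wmono rmul_wmono)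
qed

lemma B_ext_l: assumes "is_path E0 E1 r s \<mu>" "is_path E0 E1 r s \<eta>" "e \<in> E1" "s e = rpath \<mu>"
  shows "cg (B (ext \<mu> e) \<eta>) (lmul [Gh e] (B \<mu> \<eta>))"
proof (cases \<mu>)
  case (Inl u)
  have "cg (wmono [Gh e]) (wmono [Gh e, V u] :: _ \<Rightarrow> 'k)"
    using R_gs[where p = "[]" and q = "[]" and e = e] assms Inl by (auto intro: cg_sym)
  then show ?thesis using word_cg_l[of "[Gh e]" "[Gh e, V u]" "wp \<eta>"] wp_GG[OF assms(2)] Inl
    by (simp add: B_alt lmul_rmul lmul_lmul)
next
  case (Inr es)
  then show ?thesis by (simp add: B_alt lmul_rmul lmul_lmul)
qed

lemma B_ext_r: assumes "is_path E0 E1 r s \<mu>" "is_path E0 E1 r s \<eta>" "f \<in> E1" "s f = rpath \<eta>"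
  shows "cg (B \<mu> (ext \<eta> f)) (rmul (B \<mu> \<eta>) [Ed f])"
proof (cases \<eta>)
  case (Inl u)
  have "cg (wmono [Ed f]) (wmono [V u, Ed f] :: _ \<Rightarrow> 'k)"
    using R_se[where p = "[]" and q = "[]" and e = f] assms Inl by (auto intro: cg_sym)
  then show ?thesis using word_cg_r[of "[Ed f]" "[V u, Ed f]" "ws \<mu>"] ws_GG[OF assms(1)] Inl
    by (simp add: B_alt rmul_rmul)
next
  case (Inr es)
  then show ?thesis by (simp add: B_alt rmul_rmul)
qed

lemma B_loc: assumes "is_path E0 E1 r s \<mu>" "is_path E0 E1 r s \<eta>"
  shows "cg (B \<mu> \<eta>) (lmul [V (rpath \<mu>)] (rmul (B \<mu> \<eta>) [V (rpath \<eta>)]))"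
proof -
  have l: "cg (wmono (ws \<mu>)) (wmono (V (rpath \<mu>) # ws \<mu>) :: _ \<Rightarrow> 'k)"
  proof (cases \<mu>)
    case (Inl u) then show ?thesis using R_vv[where p = "[]" and q = "[]" and x = u] assms by (auto intro: cg_sym)
  next
    case (Inr es)
    then obtain es' e where es: "es = es' @ [e]" using assms by (cases es rule: rev_cases) auto
    then show ?thesis using Inr R_rg[where p = "[]" and q = "rev (map Gh es')" and e = e] assms by (auto intro: cg_sym)
  qed
  have rr: "cg (wmono (wp \<eta>)) (wmono (wp \<eta> @ [V (rpath \<eta>)]) :: _ \<Rightarrow> 'k)"
  proof (cases \<eta>)
    case (Inl u) then show ?thesis using R_vv[where p = "[]" and q = "[]" and x = u] assms by (auto intro: cg_sym)
  next
    case (Inr es)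
    then obtain es' e where es: "es = es' @ [e]" using assms by (cases es rule: rev_cases) auto
    then show ?thesis using Inr R_er[where p = "map Ed es'" and q = "[]" and e = e] assms by (auto intro: cg_sym)
  qed
  have "cg (B \<mu> \<eta>) (rmul (lmul (V (rpath \<mu>) # ws \<mu>) a) (wp \<eta>))"
    unfolding B_alt by (rule word_cg_l[OF l wp_GG[OF assms(2)]])
  also have "cg (rmul (lmul (V (rpath \<mu>) # ws \<mu>) a) (wp \<eta>)) (rmul (lmul (V (rpath \<mu>) # ws \<mu>) a) (wp \<eta> @ [V (rpath \<eta>)]))"
    by (rule word_cg_r[OF rr]) (use ws_GG[OF assms(1)] rpath_E0[OF assms(1)] in auto)
  finally show ?thesis by (simp add: B_alt lmul_rmul rmul_rmul lmul_lmul)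
qed

end

end

lemma lift_filter: "(\<And>t. f t = (if Q t then Some t else None)) \<Longrightarrow> lift f P = filter (\<lambda>(k, t). Q t) P"
  by (induction P) auto

lemma msr_filter: "msr (filter R P) \<le> msr P"
  by (induction P) (auto simp: msr_alt)

context cohn begin

lemma validP_D: "validP P \<Longrightarrow> (k, t) \<in> set P \<Longrightarrow> valid t"
  unfolding validP_def by blast

lemma Lt_deg: "Lt g t = Some t' \<Longrightarrow> degt t' = degt t + gdeg g"
proof (cases t)
  case (fields u as bs)
  assume "Lt g t = Some t'"
  then show ?thesis using fields by (cases g; cases as) (auto simp: degt_def split: if_splits)
qed

lemma Rt_deg: "Rt g t = Some t' \<Longrightarrow> degt t' = degt t + gdeg g"
proof (cases t)
  case (fields u as bs)
  assume "Rt g t = Some t'"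
  then show ?thesis using fields by (cases g; cases bs) (auto simp: degt_def split: if_splits)
qed

lemma validP_Lt: "validP P \<Longrightarrow> g \<in> GG \<Longrightarrow> validP (lift (Lt g) P)"
  using validP_lift Lt_valid by metis
lemma validP_Rt: "validP P \<Longrightarrow> g \<in> GG \<Longrightarrow> validP (lift (Rt g) P)"
  using validP_lift Rt_valid by metis
lemma homP_Lt: "homP n P \<Longrightarrow> homP (n + gdeg g) (lift (Lt g) P)"
  using homP_lift Lt_deg by metis
lemma homP_Rt: "homP n P \<Longrightarrow> homP (n + gdeg g) (lift (Rt g) P)"
  using homP_lift Rt_deg by metis

definition locP :: "'v \<Rightarrow> 'v \<Rightarrow> ('k \<times> ('v,'e) tri) list \<Rightarrow> ('k \<times> ('v,'e) tri) list" where
  "locP v w P = lift (Lt (V v)) (lift (Rt (V w)) P)"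

definition isloc :: "'v \<Rightarrow> 'v \<Rightarrow> ('v,'e) tri \<Rightarrow> bool" where
  "isloc v w t \<longleftrightarrow> (case t of (u, as, bs) \<Rightarrow> start as u = v \<and> start bs u = w)"

lemma locP_filter: "locP v w P = filter (\<lambda>(k, t). isloc v w t) P"
  unfolding locP_def lift_lift
  by (rule lift_filter) (auto simp: isloc_def split: prod.splits)

lemma locP_props:
  assumes "validP P" "homP n P"
  shows "validP (locP v w P)" "homP n (locP v w P)" "msr (locP v w P) \<le> msr P"
    "\<And>k t. (k, t) \<in> set (locP v w P) \<Longrightarrow> isloc v w t"
  using assms by (auto simp: locP_filter validP_def homP_def msr_filter)

lemma locP_cg: assumes "validP P" "v \<in> E0" "w \<in> E0"
  shows "cg (lmul [V v] (rmul (ev P) [V w])) (ev (locP v w P) :: _ \<Rightarrow> 'k::field)"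
proof -
  have "cg (lmul [V v] (rmul (ev P) [V w])) (lmul [V v] (ev (lift (Rt (V w)) P)) :: _ \<Rightarrow> 'k)"
    using cg_lmul[OF ev_lift_cg_R[OF assms(1), of "V w"]] assms by auto
  also have "cg (lmul [V v] (ev (lift (Rt (V w)) P))) (ev (locP v w P) :: _ \<Rightarrow> 'k)"
    unfolding locP_def by (rule ev_lift_cg_L[OF validP_Rt[OF assms(1)]]) (use assms in auto)
  finally show ?thesis .
qed

lemma LL_t: assumes "valid (u, a # as, bs)"
  shows "Option.bind (Lt (Gh e) (u, a # as, bs)) (Lt (Ed e)) = (if e = a then Some (u, a # as, bs) else None)"
  using assms by (cases as) (auto simp: valid.simps)

lemma RR_t: assumes "valid (u, as, b # bs)"
  shows "Option.bind (Rt (Ed f) (u, as, b # bs)) (Rt (Gh f)) = (if f = b then Some (u, as, b # bs) else None)"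
  using assms by (cases bs) (auto simp: valid.simps)

lemma sum_evo_delta: "finite F \<Longrightarrow> a \<in> F \<Longrightarrow> sum (\<lambda>e. evo (if e = a then Some t else None)) F = (wmono (nw t) :: _ \<Rightarrow> 'k::field)"
proof -
  assume "finite F" "a \<in> F"
  have "sum (\<lambda>e. evo (if e = a then Some t else None)) F = sum (\<lambda>e. if e = a then (wmono (nw t) :: _ \<Rightarrow> 'k) else 0) F"
    by (rule sum.cong) auto
  then show ?thesis using \<open>finite F\<close> \<open>a \<in> F\<close> by (simp add: sum.delta')
qed

lemma decomp_L: assumes "validP P" "finite F"
  "\<And>k u as bs. (k, (u, as, bs)) \<in> set P \<Longrightarrow> as \<noteq> [] \<and> hd as \<in> F"
  shows "ev P = sum (\<lambda>e. ev (lift (Lt (Ed e)) (lift (Lt (Gh e)) P))) (F :: 'e set)"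
proof -
  have "sum (\<lambda>e. ev (lift (Lt (Ed e)) (lift (Lt (Gh e)) P))) F
      = sum (\<lambda>e. evh (\<lambda>t. evo (Option.bind (Lt (Gh e) t) (Lt (Ed e)))) P) F"
    by (simp add: lift_lift ev_lift)
  also have "\<dots> = evh (\<lambda>t. sum (\<lambda>e. evo (Option.bind (Lt (Gh e) t) (Lt (Ed e)))) F) P"
    by (rule evh_sum[symmetric])
  also have "\<dots> = evh (\<lambda>t. wmono (nw t)) P"
  proof (rule evh_cong)
    fix k t assume kt: "(k, t) \<in> set P"
    obtain u as bs where t: "t = (u, as, bs)" by (cases t)
    obtain a as' where as: "as = a # as'" "a \<in> F" using assms(3) kt t by (cases as) fastforce+
    have "valid t" using validP_D[OF assms(1) kt] .
    then have vt: "valid (u, a # as', bs)" using t as by simp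
    show "sum (\<lambda>e. evo (Option.bind (Lt (Gh e) t) (Lt (Ed e)))) F = wmono (nw t)"
      unfolding t as(1) by (simp only: LL_t[OF vt] sum_evo_delta[OF assms(2) as(2)])
  qed
  finally show ?thesis by (simp add: ev_def)
qed

lemma decomp_R: assumes "validP P" "finite F"
  "\<And>k u as bs. (k, (u, as, bs)) \<in> set P \<Longrightarrow> bs \<noteq> [] \<and> hd bs \<in> F"
  shows "ev P = sum (\<lambda>f. ev (lift (Rt (Gh f)) (lift (Rt (Ed f)) P))) (F :: 'e set)"
proof -
  have "sum (\<lambda>f. ev (lift (Rt (Gh f)) (lift (Rt (Ed f)) P))) F
      = sum (\<lambda>f. evh (\<lambda>t. evo (Option.bind (Rt (Ed f) t) (Rt (Gh f)))) P) F"
    by (simp add: lift_lift ev_lift)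
  also have "\<dots> = evh (\<lambda>t. sum (\<lambda>f. evo (Option.bind (Rt (Ed f) t) (Rt (Gh f)))) F) P"
    by (rule evh_sum[symmetric])
  also have "\<dots> = evh (\<lambda>t. wmono (nw t)) P"
  proof (rule evh_cong)
    fix k t assume kt: "(k, t) \<in> set P"
    obtain u as bs where t: "t = (u, as, bs)" by (cases t)
    obtain b bs' where bs: "bs = b # bs'" "b \<in> F" using assms(3) kt t by (cases bs) fastforce+
    have "valid t" using validP_D[OF assms(1) kt] .
    then have vt: "valid (u, as, b # bs')" using t bs by simp
    show "sum (\<lambda>f. evo (Option.bind (Rt (Ed f) t) (Rt (Gh f)))) F = wmono (nw t)"
      unfolding t bs(1) by (simp only: RR_t[OF vt] sum_evo_delta[OF assms(2) bs(2)])
  qed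
  finally show ?thesis by (simp add: ev_def)
qed

end

context cohn begin

definition Qt :: "'e \<Rightarrow> 'e \<Rightarrow> ('v,'e) tri \<Rightarrow> ('v,'e) tri option" where
  "Qt e f t = Option.bind (Option.bind (Option.bind (Rt (Ed f) t) (Rt (Gh f))) (Lt (Gh e))) (Lt (Ed e))"

definition QP :: "'e \<Rightarrow> 'e \<Rightarrow> ('k \<times> ('v,'e) tri) list \<Rightarrow> ('k \<times> ('v,'e) tri) list" where
  "QP e f P = lift (Lt (Ed e)) (lift (Lt (Gh e)) (lift (Rt (Gh f)) (lift (Rt (Ed f)) P)))"

lemma QP_lift: "QP e f P = lift (\<lambda>t. Qt e f t) P"
  by (simp add: QP_def Qt_def lift_lift)

lemma Qt_gen: assumes v: "valid (u, a # as, b # bs)"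
  shows "Qt e f (u, a # as, b # bs) = (if e = a \<and> f = b then Some (u, a # as, b # bs) else None)"
  using v by (cases as; cases bs) (auto simp: Qt_def valid.simps)

lemma Qt_v0: assumes "f \<in> E1" "s f = v"
  shows "Qt e f (v, [], []) = (if e = f then Some (r e, [e], [e]) else None)"
  using assms by (auto simp: Qt_def)

definition csum :: "'v \<Rightarrow> ('k::field \<times> ('v,'e) tri) list \<Rightarrow> 'k" where
  "csum v P = sum_list (map (\<lambda>(k, t). if t = (v, [], []) then k else 0) P)"

lemma sum_sum_delta: "finite F \<Longrightarrow> a \<in> F \<Longrightarrow> b \<in> F \<Longrightarrow>
   sum (\<lambda>e. sum (\<lambda>f. evo (if e = a \<and> f = b then Some t else None)) F) F = (wmono (nw t) :: _ \<Rightarrow> 'k::field)"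
proof -
  assume fin: "finite F" and ab: "a \<in> F" "b \<in> F"
  have "sum (\<lambda>e. sum (\<lambda>f. evo (if e = a \<and> f = b then Some t else None)) F) F
      = sum (\<lambda>e. if e = a then (wmono (nw t) :: _ \<Rightarrow> 'k) else 0) F"
  proof (rule sum.cong)
    fix e assume "e \<in> F"
    show "sum (\<lambda>f. evo (if e = a \<and> f = b then Some t else None)) F = (if e = a then wmono (nw t) else 0)"
    proof (cases "e = a")
      case True then show ?thesis using sum_evo_delta[OF fin ab(2), of t] by simp
    qed simp
  qed simp
  then show ?thesis using fin ab by (simp add: sum.delta')
qed

lemma sum_sum_v0: "finite F \<Longrightarrow> F \<subseteq> {e \<in> E1. s e = v} \<Longrightarrow>
   sum (\<lambda>e. sum (\<lambda>f. evo (Qt e f (v, [], []))) F) F = (sum (\<lambda>e. wmono [Ed e, Gh e]) F :: _ \<Rightarrow> 'k::field)"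
proof (rule sum.cong)
  fix e assume fin: "finite F" and F: "F \<subseteq> {e \<in> E1. s e = v}" and e: "e \<in> F"
  have "sum (\<lambda>f. evo (Qt e f (v, [], []))) F = sum (\<lambda>f. evo (if f = e then Some (r e, [e], [e]) else None)) F"
    by (rule sum.cong) (use F Qt_v0 in auto)
  also have "\<dots> = (wmono (nw (r e, [e], [e])) :: _ \<Rightarrow> 'k)" by (rule sum_evo_delta[OF fin e])
  finally show "sum (\<lambda>f. evo (Qt e f (v, [], []))) F = (wmono [Ed e, Gh e] :: _ \<Rightarrow> 'k)" by simp
qed simp

lemma decomp_2: assumes "validP P" "finite F" "F \<subseteq> {e \<in> E1. s e = v}"
  "\<And>k t. (k, t) \<in> set P \<Longrightarrow> t = (v, [], []) \<or> (\<exists>u a as b bs. t = (u, a # as, b # bs) \<and> a \<in> F \<and> b \<in> F)"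
  shows "sum (\<lambda>e. sum (\<lambda>f. ev (QP e f P)) F) F
     = ev P + smul (csum v P) (sum (\<lambda>e. wmono [Ed e, Gh e]) F - wmono [V v] :: _ \<Rightarrow> 'k::field)"
proof -
  let ?H = "(sum (\<lambda>e. wmono [Ed e, Gh e]) F - wmono [V v] :: _ \<Rightarrow> 'k)"
  have "sum (\<lambda>e. sum (\<lambda>f. ev (QP e f P)) F) F = sum (\<lambda>e. sum (\<lambda>f. evh (\<lambda>t. evo (Qt e f t)) P) F) F"
    by (simp add: QP_lift ev_lift)
  also have "\<dots> = sum (\<lambda>e. evh (\<lambda>t. sum (\<lambda>f. evo (Qt e f t)) F) P) F"
    by (simp add: evh_sum)
  also have "\<dots> = evh (\<lambda>t. sum (\<lambda>e. sum (\<lambda>f. evo (Qt e f t)) F) F) P"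
    by (rule evh_sum[symmetric])
  also have "\<dots> = evh (\<lambda>t. wmono (nw t) + (if t = (v, [], []) then ?H else 0)) P"
  proof (rule evh_cong)
    fix k t assume kt: "(k, t) \<in> set P"
    show "sum (\<lambda>e. sum (\<lambda>f. evo (Qt e f t)) F) F = wmono (nw t) + (if t = (v, [], []) then ?H else 0)"
    proof (cases "t = (v, [], [])")
      case True
      then show ?thesis using sum_sum_v0[OF assms(2,3)] by simp
    next
      case False
      then obtain u a as b bs where t: "t = (u, a # as, b # bs)" "a \<in> F" "b \<in> F" using assms(4)[OF kt] by blast
      have vt: "valid (u, a # as, b # bs)" using validP_D[OF assms(1) kt] t by simp
      have "sum (\<lambda>e. sum (\<lambda>f. evo (Qt e f t)) F) F = wmono (nw t)"
        unfolding t(1) by (simp only: Qt_gen[OF vt] sum_sum_delta[OF assms(2) t(2,3)])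
      then show ?thesis using False by simp
    qed
  qed
  also have "\<dots> = ev P + evh (\<lambda>t. if t = (v, [], []) then ?H else 0) P"
    by (simp only: evh_add ev_def)
  also have "\<dots> = ev P + smul (csum v P) ?H"
    by (simp only: evh_point csum_def)
  finally show ?thesis .
qed

lemma QP_cg: assumes "validP P" "e \<in> E1" "f \<in> E1"
  shows "cg (ev (QP e f P)) (lmul [Ed e] (lmul [Gh e] (rmul (rmul (ev P) [Ed f]) [Gh f])) :: _ \<Rightarrow> 'k::field)"
proof -
  let ?P1 = "lift (Rt (Ed f)) P" let ?P2 = "lift (Rt (Gh f)) ?P1" let ?P3 = "lift (Lt (Gh e)) ?P2"
  have v1: "validP ?P1" and v2: "validP ?P2" and v3: "validP ?P3"
    using assms by (auto intro!: validP_Rt validP_Lt)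
  have "cg (lmul [Ed e] (lmul [Gh e] (rmul (rmul (ev P) [Ed f]) [Gh f]))) (lmul [Ed e] (lmul [Gh e] (rmul (ev ?P1) [Gh f])) :: _ \<Rightarrow> 'k)"
    using assms by (intro cg_lmul cg_rmul ev_lift_cg_R) auto
  also have "cg (lmul [Ed e] (lmul [Gh e] (rmul (ev ?P1) [Gh f]))) (lmul [Ed e] (lmul [Gh e] (ev ?P2)) :: _ \<Rightarrow> 'k)"
    using assms v1 by (intro cg_lmul ev_lift_cg_R) auto
  also have "cg (lmul [Ed e] (lmul [Gh e] (ev ?P2))) (lmul [Ed e] (ev ?P3) :: _ \<Rightarrow> 'k)"
    using assms v2 by (intro cg_lmul ev_lift_cg_L) auto
  also have "cg (lmul [Ed e] (ev ?P3)) (ev (QP e f P) :: _ \<Rightarrow> 'k)"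
    unfolding QP_def using assms v3 by (intro ev_lift_cg_L) auto
  finally show ?thesis by (rule cg_sym)
qed

lemma LL_cg: assumes "validP P" "e \<in> E1"
  shows "cg (ev (lift (Lt (Ed e)) (lift (Lt (Gh e)) P))) (lmul [Ed e] (lmul [Gh e] (ev P)) :: _ \<Rightarrow> 'k::field)"
proof -
  have "cg (lmul [Ed e] (lmul [Gh e] (ev P))) (lmul [Ed e] (ev (lift (Lt (Gh e)) P)) :: _ \<Rightarrow> 'k)"
    using assms by (intro cg_lmul ev_lift_cg_L) auto
  also have "cg (lmul [Ed e] (ev (lift (Lt (Gh e)) P))) (ev (lift (Lt (Ed e)) (lift (Lt (Gh e)) P)) :: _ \<Rightarrow> 'k)"
    using assms by (intro ev_lift_cg_L validP_Lt) auto
  finally show ?thesis by (rule cg_sym)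
qed

lemma RR_cg: assumes "validP P" "f \<in> E1"
  shows "cg (ev (lift (Rt (Gh f)) (lift (Rt (Ed f)) P))) (rmul (rmul (ev P) [Ed f]) [Gh f] :: _ \<Rightarrow> 'k::field)"
proof -
  have "cg (rmul (rmul (ev P) [Ed f]) [Gh f]) (rmul (ev (lift (Rt (Ed f)) P)) [Gh f] :: _ \<Rightarrow> 'k)"
    using assms by (intro cg_rmul ev_lift_cg_R) auto
  also have "cg (rmul (ev (lift (Rt (Ed f)) P)) [Gh f]) (ev (lift (Rt (Gh f)) (lift (Rt (Ed f)) P)) :: _ \<Rightarrow> 'k)"
    using assms by (intro ev_lift_cg_R validP_Rt) auto
  finally show ?thesis by (rule cg_sym)
qed

end

context cohn begin

lemma vertex_notin: "u \<in> E0 \<Longrightarrow> (wmono [V u] :: _ \<Rightarrow> 'k::field) \<notin> II"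
  by (rule vertex_notin')

lemma smul_notin: "x \<notin> II \<Longrightarrow> c \<noteq> 0 \<Longrightarrow> smul c x \<notin> II"
proof
  assume "x \<notin> II" "c \<noteq> 0" "smul c x \<in> II"
  then have "smul (inverse c) (smul c x) \<in> II" by (rule_tac I_smul)
  then show False using \<open>x \<notin> II\<close> \<open>c \<noteq> 0\<close> by (simp add: smul_smul)
qed

lemma cg_in: "cg x y \<Longrightarrow> y \<in> II \<Longrightarrow> x \<in> II"
  unfolding cg_def using I_add by fastforce

definition GOAL :: "(('v,'e) gen list \<Rightarrow> 'k::field) \<Rightarrow> bool" where
  "GOAL a \<longleftrightarrow> (\<exists>\<mu> \<eta>. is_path E0 E1 r s \<mu> \<and> is_path E0 E1 r s \<eta> \<and>
           (let b = fmul (fmul (pth_star \<mu>) a) (pth \<eta>) in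
              b \<notin> II \<and>
              (\<exists>k. k \<noteq> 0 \<and>
                 ((\<exists>u\<in>E0. fsub b (smul k (wmono [V u])) \<in> II) \<or>
                  (\<exists>v\<in>Reg E0 E1 s - X. fsub b (smul k (gap E1 s v)) \<in> II)))))"

context
  fixes a :: "('v,'e) gen list \<Rightarrow> 'k::field"
  assumes fa: "finite {w. a w \<noteq> 0}" "\<And>w. a w \<noteq> 0 \<Longrightarrow> set w \<subseteq> GG"
begin

lemma tgt_u: assumes "is_path E0 E1 r s \<mu>" "is_path E0 E1 r s \<eta>" "B a \<mu> \<eta> \<notin> II" "u \<in> E0"
  "cg (B a \<mu> \<eta>) (smul k (wmono [V u]))"
  shows "GOAL a"
proof -
  have "k \<noteq> 0"
  proof
    assume "k = 0"
    then have "B a \<mu> \<eta> \<in> II" using assms(5) by (simp add: cg_def)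
    then show False using assms(3) by simp
  qed
  then show ?thesis unfolding GOAL_def using assms
    by (intro exI[of _ \<mu>] exI[of _ \<eta>]) (auto simp: Let_def B_def[OF fa] fsub_eq cg_def)
qed

lemma tgt_gap: assumes "is_path E0 E1 r s \<mu>" "is_path E0 E1 r s \<eta>" "B a \<mu> \<eta> \<notin> II" "v \<in> Reg E0 E1 s - X"
  "cg (B a \<mu> \<eta>) (smul k (gap E1 s v))"
  shows "GOAL a"
proof -
  have "k \<noteq> 0"
  proof
    assume "k = 0"
    then have "B a \<mu> \<eta> \<in> II" using assms(5) by (simp add: cg_def)
    then show False using assms(3) by simp
  qed
  then show ?thesis unfolding GOAL_def using assms
    by (intro exI[of _ \<mu>] exI[of _ \<eta>]) (auto simp: Let_def B_def[OF fa] fsub_eq cg_def)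
qed

lemma case_A:
  assumes IH: "\<And>\<mu>' \<eta>' P' n'. msr P' < msr P \<Longrightarrow> is_path E0 E1 r s \<mu>' \<Longrightarrow> is_path E0 E1 r s \<eta>' \<Longrightarrow>
      validP P' \<Longrightarrow> homP n' P' \<Longrightarrow> B a \<mu>' \<eta>' \<notin> II \<Longrightarrow> cg (B a \<mu>' \<eta>') (ev P') \<Longrightarrow> GOAL a"
  and pm: "is_path E0 E1 r s \<mu>" and pe: "is_path E0 E1 r s \<eta>" and vP: "validP P" and hP: "homP n P"
  and Bn: "B a \<mu> \<eta> \<notin> II" and Bc: "cg (B a \<mu> \<eta>) (ev P)"
  and loc: "\<And>k t. (k, t) \<in> set P \<Longrightarrow> isloc (rpath \<mu>) (rpath \<eta>) t"
  and ne: "P \<noteq> []"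
  and nas: "\<And>k u as bs. (k, (u, as, bs)) \<in> set P \<Longrightarrow> as \<noteq> []"
  shows "GOAL a"
proof -
  define F where "F = (\<lambda>(k, (u, as, bs)). hd as) ` set P"
  have finF: "finite F" unfolding F_def by simp
  have heads: "as \<noteq> [] \<and> hd as \<in> F" if "(k, (u, as, bs)) \<in> set P" for k u as bs
    using nas[OF that] that unfolding F_def by force
  have FE: "e \<in> E1 \<and> s e = rpath \<mu>" if eF: "e \<in> F" for e
  proof -
    obtain x where x: "x \<in> set P" "e = (\<lambda>(k, (u, as, bs)). hd as) x" using eF unfolding F_def by blast
    obtain k u as bs where xx: "x = (k, u, as, bs)" by (metis prod.collapse)
    have kt: "(k, (u, as, bs)) \<in> set P" "e = hd as" using x xx by auto
    have "as \<noteq> []" using nas kt by blast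
    moreover have "valid (u, as, bs)" using validP_D[OF vP kt(1)] .
    moreover have "isloc (rpath \<mu>) (rpath \<eta>) (u, as, bs)" using loc kt(1) .
    ultimately show ?thesis using kt(2) by (cases as) (auto simp: valid.simps isloc_def)
  qed
  have dec: "ev P = sum (\<lambda>e. ev (lift (Lt (Ed e)) (lift (Lt (Gh e)) P))) F"
    by (rule decomp_L[OF vP finF]) (use heads in blast)
  have "\<exists>e\<in>F. lmul [Gh e] (B a \<mu> \<eta>) \<notin> II"
  proof (rule ccontr)
    assume "\<not> (\<exists>e\<in>F. lmul [Gh e] (B a \<mu> \<eta>) \<notin> II)"
    then have all: "lmul [Gh e] (B a \<mu> \<eta>) \<in> II" if "e \<in> F" for e using that by blast
    have "ev (lift (Lt (Ed e)) (lift (Lt (Gh e)) P)) \<in> II" if eF: "e \<in> F" for e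
    proof -
      have e1: "e \<in> E1" using FE[OF eF] by simp
      have "cg (ev (lift (Lt (Ed e)) (lift (Lt (Gh e)) P))) (lmul [Ed e] (lmul [Gh e] (ev P)))"
        by (rule LL_cg[OF vP e1])
      also have "cg (lmul [Ed e] (lmul [Gh e] (ev P))) (lmul [Ed e] (lmul [Gh e] (B a \<mu> \<eta>)))"
        using e1 by (intro cg_lmul cg_sym[OF Bc]) auto
      finally show ?thesis using I_lmul[OF all[OF eF], of "[Ed e]"] e1 cg_in by auto
    qed
    then have "ev P \<in> II" unfolding dec using finF by (intro I_sum) auto
    then have "B a \<mu> \<eta> \<in> II" using cg_in[OF Bc] by blast
    then show False using Bn by simp
  qed
  then obtain e where eF: "e \<in> F" and en: "lmul [Gh e] (B a \<mu> \<eta>) \<notin> II" by blast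
  have e1: "e \<in> E1" and se: "s e = rpath \<mu>" using FE[OF eF] by auto
  define \<mu>' where "\<mu>' = ext \<mu> e"
  have pm': "is_path E0 E1 r s \<mu>'" using ext_path[OF pm e1 se] \<mu>'_def by simp
  define P' where "P' = lift (Lt (Gh e)) P"
  have c1: "cg (B a \<mu>' \<eta>) (lmul [Gh e] (B a \<mu> \<eta>))" unfolding \<mu>'_def by (rule B_ext_l[OF fa pm pe e1 se])
  have c2: "cg (B a \<mu>' \<eta>) (ev P')"
  proof -
    note c1
    also have "cg (lmul [Gh e] (B a \<mu> \<eta>)) (lmul [Gh e] (ev P))" using Bc e1 by (intro cg_lmul) auto
    also have "cg (lmul [Gh e] (ev P)) (ev P')" unfolding P'_def using vP e1 by (intro ev_lift_cg_L) auto
    finally show ?thesis .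
  qed
  have Bn': "B a \<mu>' \<eta> \<notin> II" using cg_notI[OF cg_sym[OF c1] en] .
  have vP': "validP P'" unfolding P'_def using vP e1 by (intro validP_Lt) auto
  have hP': "homP (n + gdeg (Gh e :: ('v,'e) gen)) P'" unfolding P'_def by (rule homP_Lt[OF hP])
  obtain k0 t0 where k0: "(k0, t0) \<in> set P" using ne by (cases P) auto
  have m: "msr P' < msr P" unfolding P'_def
  proof (rule msr_lift_less[OF _ k0])
    fix k t t' assume kt: "(k, t) \<in> set P" "Lt (Gh e) t = Some t'"
    obtain u as bs where t: "t = (u, as, bs)" by (cases t)
    obtain a1 as' where as: "as = a1 # as'" using nas kt(1) t by (cases as) auto
    show "sz t' \<le> sz t \<and> (0 < sz t \<longrightarrow> sz t' < sz t)" using kt(2) t as by (auto split: if_splits)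
  next
    obtain u as bs where t: "t0 = (u, as, bs)" by (cases t0)
    then show "0 < sz t0" using nas k0 by (cases as) auto
  qed
  show ?thesis by (rule IH[OF m pm' pe vP' hP' Bn' c2])
qed

lemma case_B:
  assumes IH: "\<And>\<mu>' \<eta>' P' n'. msr P' < msr P \<Longrightarrow> is_path E0 E1 r s \<mu>' \<Longrightarrow> is_path E0 E1 r s \<eta>' \<Longrightarrow>
      validP P' \<Longrightarrow> homP n' P' \<Longrightarrow> B a \<mu>' \<eta>' \<notin> II \<Longrightarrow> cg (B a \<mu>' \<eta>') (ev P') \<Longrightarrow> GOAL a"
  and pm: "is_path E0 E1 r s \<mu>" and pe: "is_path E0 E1 r s \<eta>" and vP: "validP P" and hP: "homP n P"
  and Bn: "B a \<mu> \<eta> \<notin> II" and Bc: "cg (B a \<mu> \<eta>) (ev P)"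
  and loc: "\<And>k t. (k, t) \<in> set P \<Longrightarrow> isloc (rpath \<mu>) (rpath \<eta>) t"
  and ne: "P \<noteq> []"
  and nbs: "\<And>k u as bs. (k, (u, as, bs)) \<in> set P \<Longrightarrow> bs \<noteq> []"
  shows "GOAL a"
proof -
  define F where "F = (\<lambda>(k, (u, as, bs)). hd bs) ` set P"
  have finF: "finite F" unfolding F_def by simp
  have heads: "bs \<noteq> [] \<and> hd bs \<in> F" if "(k, (u, as, bs)) \<in> set P" for k u as bs
    using nbs[OF that] that unfolding F_def by force
  have FE: "e \<in> E1 \<and> s e = rpath \<eta>" if eF: "e \<in> F" for e
  proof -
    obtain x where x: "x \<in> set P" "e = (\<lambda>(k, (u, as, bs)). hd bs) x" using eF unfolding F_def by blast
    obtain k u as bs where xx: "x = (k, u, as, bs)" by (metis prod.collapse)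
    have kt: "(k, (u, as, bs)) \<in> set P" "e = hd bs" using x xx by auto
    have "bs \<noteq> []" using nbs kt by blast
    moreover have "valid (u, as, bs)" using validP_D[OF vP kt(1)] .
    moreover have "isloc (rpath \<mu>) (rpath \<eta>) (u, as, bs)" using loc kt(1) .
    ultimately show ?thesis using kt(2) by (cases bs) (auto simp: valid.simps isloc_def)
  qed
  have dec: "ev P = sum (\<lambda>f. ev (lift (Rt (Gh f)) (lift (Rt (Ed f)) P))) F"
    by (rule decomp_R[OF vP finF]) (use heads in blast)
  have "\<exists>e\<in>F. rmul (B a \<mu> \<eta>) [Ed e] \<notin> II"
  proof (rule ccontr)
    assume "\<not> (\<exists>e\<in>F. rmul (B a \<mu> \<eta>) [Ed e] \<notin> II)"
    then have all: "rmul (B a \<mu> \<eta>) [Ed e] \<in> II" if "e \<in> F" for e using that by blast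
    have "ev (lift (Rt (Gh e)) (lift (Rt (Ed e)) P)) \<in> II" if eF: "e \<in> F" for e
    proof -
      have e1: "e \<in> E1" using FE[OF eF] by simp
      have "cg (ev (lift (Rt (Gh e)) (lift (Rt (Ed e)) P))) (rmul (rmul (ev P) [Ed e]) [Gh e])"
        by (rule RR_cg[OF vP e1])
      also have "cg (rmul (rmul (ev P) [Ed e]) [Gh e]) (rmul (rmul (B a \<mu> \<eta>) [Ed e]) [Gh e])"
        using e1 by (intro cg_rmul cg_sym[OF Bc]) auto
      finally show ?thesis using I_rmul[OF all[OF eF], of "[Gh e]"] e1 cg_in by auto
    qed
    then have "ev P \<in> II" unfolding dec using finF by (intro I_sum) auto
    then have "B a \<mu> \<eta> \<in> II" using cg_in[OF Bc] by blast
    then show False using Bn by simp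
  qed
  then obtain e where eF: "e \<in> F" and en: "rmul (B a \<mu> \<eta>) [Ed e] \<notin> II" by blast
  have e1: "e \<in> E1" and se: "s e = rpath \<eta>" using FE[OF eF] by auto
  define \<eta>' where "\<eta>' = ext \<eta> e"
  have pe': "is_path E0 E1 r s \<eta>'" using ext_path[OF pe e1 se] \<eta>'_def by simp
  define P' where "P' = lift (Rt (Ed e)) P"
  have c1: "cg (B a \<mu> \<eta>') (rmul (B a \<mu> \<eta>) [Ed e])" unfolding \<eta>'_def by (rule B_ext_r[OF fa pm pe e1 se])
  have c2: "cg (B a \<mu> \<eta>') (ev P')"
  proof -
    note c1
    also have "cg (rmul (B a \<mu> \<eta>) [Ed e]) (rmul (ev P) [Ed e])" using Bc e1 by (intro cg_rmul) auto
    also have "cg (rmul (ev P) [Ed e]) (ev P')" unfolding P'_def using vP e1 by (intro ev_lift_cg_R) auto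
    finally show ?thesis .
  qed
  have Bn': "B a \<mu> \<eta>' \<notin> II" using cg_notI[OF cg_sym[OF c1] en] .
  have vP': "validP P'" unfolding P'_def using vP e1 by (intro validP_Rt) auto
  have hP': "homP (n + gdeg (Ed e :: ('v,'e) gen)) P'" unfolding P'_def by (rule homP_Rt[OF hP])
  obtain k0 t0 where k0: "(k0, t0) \<in> set P" using ne by (cases P) auto
  have m: "msr P' < msr P" unfolding P'_def
  proof (rule msr_lift_less[OF _ k0])
    fix k t t' assume kt: "(k, t) \<in> set P" "Rt (Ed e) t = Some t'"
    obtain u as bs where t: "t = (u, as, bs)" by (cases t)
    obtain b1 bs' where bs: "bs = b1 # bs'" using nbs kt(1) t by (cases bs) auto
    show "sz t' \<le> sz t \<and> (0 < sz t \<longrightarrow> sz t' < sz t)" using kt(2) t bs by (auto split: if_splits)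
  next
    obtain u as bs where t: "t0 = (u, as, bs)" by (cases t0)
    then show "0 < sz t0" using nbs k0 by (cases bs) auto
  qed
  show ?thesis by (rule IH[OF m pm pe' vP' hP' Bn' c2])
qed

end
end

context cohn begin

context
  fixes a :: "('v,'e) gen list \<Rightarrow> 'k::field"
  assumes fa: "finite {w. a w \<noteq> 0}" "\<And>w. a w \<noteq> 0 \<Longrightarrow> set w \<subseteq> GG"
begin

lemma Bext2: assumes pm: "is_path E0 E1 r s \<mu>" and pe: "is_path E0 E1 r s \<eta>"
  and e1: "e \<in> E1" "s e = rpath \<mu>" and f1: "f \<in> E1" "s f = rpath \<eta>"
  shows "is_path E0 E1 r s (ext \<mu> e)" "is_path E0 E1 r s (ext \<eta> f)"
    "cg (B a (ext \<mu> e) (ext \<eta> f)) (lmul [Gh e] (rmul (B a \<mu> \<eta>) [Ed f]))"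
proof -
  show pm': "is_path E0 E1 r s (ext \<mu> e)" using ext_path[OF pm e1] by simp
  show pe': "is_path E0 E1 r s (ext \<eta> f)" using ext_path[OF pe f1] by simp
  have "cg (B a (ext \<mu> e) (ext \<eta> f)) (lmul [Gh e] (B a \<mu> (ext \<eta> f)))"
    by (rule B_ext_l[OF fa pm pe' e1])
  also have "cg (lmul [Gh e] (B a \<mu> (ext \<eta> f))) (lmul [Gh e] (rmul (B a \<mu> \<eta>) [Ed f]))"
    using B_ext_r[OF fa pm pe f1] e1 by (intro cg_lmul) auto
  finally show "cg (B a (ext \<mu> e) (ext \<eta> f)) (lmul [Gh e] (rmul (B a \<mu> \<eta>) [Ed f]))" .
qed

lemma case_C:
  assumes IH: "\<And>\<mu>' \<eta>' P' n'. msr P' < msr P \<Longrightarrow> is_path E0 E1 r s \<mu>' \<Longrightarrow> is_path E0 E1 r s \<eta>' \<Longrightarrow>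
      validP P' \<Longrightarrow> homP n' P' \<Longrightarrow> B a \<mu>' \<eta>' \<notin> II \<Longrightarrow> cg (B a \<mu>' \<eta>') (ev P') \<Longrightarrow> GOAL a"
  and pm: "is_path E0 E1 r s \<mu>" and pe: "is_path E0 E1 r s \<eta>" and vP: "validP P" and hP: "homP n P"
  and Bn: "B a \<mu> \<eta> \<notin> II" and Bc: "cg (B a \<mu> \<eta>) (ev P)"
  and loc: "\<And>k t. (k, t) \<in> set P \<Longrightarrow> isloc (rpath \<mu>) (rpath \<eta>) t"
  and t1: "(k1, (u1, [], bs1)) \<in> set P" and t2: "(k2, (u2, as2, [])) \<in> set P"
  shows "GOAL a"
proof -
  define v where "v = rpath \<mu>"
  have vE0: "v \<in> E0" unfolding v_def by (rule rpath_E0[OF pm])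
  have d1: "- int (length bs1) = n" using hP t1 unfolding homP_def degt_def by fastforce
  have d2: "int (length as2) = n" using hP t2 unfolding homP_def degt_def by fastforce
  have n0: "n = 0" using d1 d2 by linarith
  have bs1: "bs1 = []" using d1 n0 by simp
  have vw: "rpath \<eta> = v" and u1: "u1 = v" using loc[OF t1] bs1 unfolding v_def isloc_def by auto
  have shape0: "t = (v, [], []) \<or> (\<exists>u a1 as b1 bs. t = (u, a1 # as, b1 # bs))" if kt: "(k, t) \<in> set P" for k t
  proof -
    obtain u as bs where t: "t = (u, as, bs)" by (cases t)
    have "length as = length bs" using hP kt t n0 unfolding homP_def degt_def by force
    moreover have "as = [] \<longrightarrow> u = v" using loc[OF kt] t unfolding isloc_def v_def by auto
    ultimately show ?thesis using t by (cases as; cases bs) auto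
  qed
  define F where "F = {e. \<exists>k u a1 as b1 bs. (k, (u, a1 # as, b1 # bs)) \<in> set P \<and> (e = a1 \<or> e = b1)}"
  have finF: "finite F"
  proof (rule finite_subset)
    show "F \<subseteq> (\<lambda>(k, (u, as, bs)). hd as) ` set P \<union> (\<lambda>(k, (u, as, bs)). hd bs) ` set P"
      unfolding F_def by (auto simp: image_iff) (metis list.sel(1) case_prod_conv)+
  qed simp
  have FS: "F \<subseteq> {e \<in> E1. s e = v}"
  proof
    fix e assume "e \<in> F"
    then obtain k u a1 as b1 bs where kt: "(k, (u, a1 # as, b1 # bs)) \<in> set P" "e = a1 \<or> e = b1"
      unfolding F_def by blast
    have "valid (u, a1 # as, b1 # bs)" by (rule validP_D[OF vP kt(1)])
    moreover have "isloc v v (u, a1 # as, b1 # bs)" using loc[OF kt(1)] vw v_def by simp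
    ultimately show "e \<in> {e \<in> E1. s e = v}" using kt(2) by (auto simp: valid.simps isloc_def)
  qed
  show ?thesis
  proof (cases "\<forall>k t. (k, t) \<in> set P \<longrightarrow> t = (v, [], [])")
    case True
    have "ev P = evh (\<lambda>t. if t = (v, [], []) then wmono [V v] else 0) P"
      unfolding ev_def by (rule evh_cong) (use True in auto)
    also have "\<dots> = smul (csum v P) (wmono [V v])" by (simp only: evh_point csum_def)
    finally show ?thesis using tgt_u[OF fa pm pe Bn vE0] Bc by simp
  next
    case False
    then obtain k0 t0 where k0: "(k0, t0) \<in> set P" "t0 \<noteq> (v, [], [])" by blast
    define S where "S = (if v \<in> X then {e \<in> E1. s e = v} else F)"
    have finS: "finite S" using finF XReg unfolding S_def Reg_def by auto
    have SS: "S \<subseteq> {e \<in> E1. s e = v}" using FS unfolding S_def by auto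
    have FinS: "F \<subseteq> S" using FS unfolding S_def by auto
    have shape: "t = (v, [], []) \<or> (\<exists>u a1 as b1 bs. t = (u, a1 # as, b1 # bs) \<and> a1 \<in> S \<and> b1 \<in> S)"
      if kt: "(k, t) \<in> set P" for k t
      using shape0[OF kt] kt FinS unfolding F_def by blast
    define c where "c = csum v P"
    define GS where "GS = (sum (\<lambda>e. wmono [Ed e, Gh e]) S :: ('v,'e) gen list \<Rightarrow> 'k)"
    have dec: "sum (\<lambda>e. sum (\<lambda>f. ev (QP e f P)) S) S = ev P + smul c (GS - wmono [V v])"
      unfolding c_def GS_def by (rule decomp_2[OF vP finS SS shape])
    show ?thesis
    proof (cases "\<exists>e\<in>S. \<exists>f\<in>S. lmul [Gh e] (rmul (B a \<mu> \<eta>) [Ed f]) \<notin> II")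
      case True
      then obtain e f where ef: "e \<in> S" "f \<in> S" and en: "lmul [Gh e] (rmul (B a \<mu> \<eta>) [Ed f]) \<notin> II" by blast
      have e1: "e \<in> E1" "s e = rpath \<mu>" and f1: "f \<in> E1" "s f = rpath \<eta>"
        using ef SS vw v_def by auto
      note X = Bext2[OF pm pe e1 f1]
      define P' where "P' = lift (Lt (Gh e)) (lift (Rt (Ed f)) P)"
      have c2: "cg (B a (ext \<mu> e) (ext \<eta> f)) (ev P')"
      proof -
        note X(3)
        also have "cg (lmul [Gh e] (rmul (B a \<mu> \<eta>) [Ed f])) (lmul [Gh e] (rmul (ev P) [Ed f]))"
          using Bc e1 f1 by (intro cg_lmul cg_rmul) auto
        also have "cg (lmul [Gh e] (rmul (ev P) [Ed f])) (lmul [Gh e] (ev (lift (Rt (Ed f)) P)))"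
          using vP e1 f1 by (intro cg_lmul ev_lift_cg_R) auto
        also have "cg (lmul [Gh e] (ev (lift (Rt (Ed f)) P))) (ev P')"
          unfolding P'_def using vP e1 f1 by (intro ev_lift_cg_L validP_Rt) auto
        finally show ?thesis .
      qed
      have Bn': "B a (ext \<mu> e) (ext \<eta> f) \<notin> II" using cg_notI[OF cg_sym[OF X(3)] en] .
      have vP': "validP P'" unfolding P'_def using vP e1 f1 by (intro validP_Rt validP_Lt) auto
      have hP': "homP (n + gdeg (Ed f :: ('v,'e) gen) + gdeg (Gh e :: ('v,'e) gen)) P'"
        unfolding P'_def by (rule homP_Lt[OF homP_Rt[OF hP]])
      have m: "msr P' < msr P" unfolding P'_def lift_lift
      proof (rule msr_lift_less[OF _ k0(1)])
        fix k t t' assume kt: "(k, t) \<in> set P" "Option.bind (Rt (Ed f) t) (Lt (Gh e)) = Some t'"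
        show "sz t' \<le> sz t \<and> (0 < sz t \<longrightarrow> sz t' < sz t)"
        proof (cases "t = (v, [], [])")
          case True
          then show ?thesis using kt(2) f1 vw by (auto split: if_splits)
        next
          case False
          then obtain u a1 as b1 bs where "t = (u, a1 # as, b1 # bs)" using shape[OF kt(1)] by blast
          then show ?thesis using kt(2) by (auto split: if_splits)
        qed
      next
        show "0 < sz t0" using shape[OF k0(1)] k0(2) by auto
      qed
      show ?thesis by (rule IH[OF m X(1) X(2) vP' hP' Bn' c2])
    next
      case False
      then have allI: "lmul [Gh e] (rmul (B a \<mu> \<eta>) [Ed f]) \<in> II" if "e \<in> S" "f \<in> S" for e f
        using that by blast
      have QI: "ev (QP e f P) \<in> II" if ef: "e \<in> S" "f \<in> S" for e f
      proof -
        have e1: "e \<in> E1" and f1: "f \<in> E1" using ef SS by auto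
        have "cg (ev (QP e f P)) (lmul [Ed e] (lmul [Gh e] (rmul (rmul (ev P) [Ed f]) [Gh f])))"
          by (rule QP_cg[OF vP e1 f1])
        also have "cg (lmul [Ed e] (lmul [Gh e] (rmul (rmul (ev P) [Ed f]) [Gh f])))
                      (lmul [Ed e] (lmul [Gh e] (rmul (rmul (B a \<mu> \<eta>) [Ed f]) [Gh f])))"
          using e1 f1 by (intro cg_lmul cg_rmul cg_sym[OF Bc]) auto
        finally have "cg (ev (QP e f P)) (lmul [Ed e] (rmul (lmul [Gh e] (rmul (B a \<mu> \<eta>) [Ed f])) [Gh f]))"
          by (simp add: lmul_rmul)
        moreover have "lmul [Ed e] (rmul (lmul [Gh e] (rmul (B a \<mu> \<eta>) [Ed f])) [Gh f]) \<in> II"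
          using I_lmul[OF I_rmul[OF allI[OF ef], of "[Gh f]"], of "[Ed e]"] e1 f1 by auto
        ultimately show ?thesis using cg_in by blast
      qed
      have "ev P + smul c (GS - wmono [V v]) \<in> II"
        unfolding dec[symmetric] using finS QI by (intro I_sum) auto
      moreover have "ev P + smul c (GS - wmono [V v]) = ev P - smul c (wmono [V v] - GS)"
        by (simp add: smul_diff)
      ultimately have Pc: "cg (ev P) (smul c (wmono [V v] - GS))" by (simp add: cg_def)
      have Bc2: "cg (B a \<mu> \<eta>) (smul c (wmono [V v] - GS))" by (rule cg_trans[OF Bc Pc])
      have cn: "c \<noteq> 0"
      proof
        assume "c = 0" then show False using Bc2 Bn by (simp add: cg_def)
      qed
      show ?thesis
      proof (cases "v \<in> X")
        case True
        then have "cg (wmono [V v]) GS"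
          unfolding GS_def S_def using R_gap[of v "[]" "[]"] by simp
        then have "smul c (wmono [V v] - GS) \<in> II" by (intro I_smul) (simp add: cg_def)
        then show ?thesis using Bc2 Bn cg_in by blast
      next
        case vX: False
        then have SF: "S = F" unfolding S_def by simp
        show ?thesis
        proof (cases "{e \<in> E1. s e = v} = {}")
          case True
          then have "S = {}" using SS by auto
          then have "GS = 0" unfolding GS_def by simp
          then show ?thesis using tgt_u[OF fa pm pe Bn vE0] Bc2 by simp
        next
          case nonempty: False
          show ?thesis
          proof (cases "finite {e \<in> E1. s e = v} \<and> S = {e \<in> E1. s e = v}")
            case True
            then have vY: "v \<in> Reg E0 E1 s - X" using vX vE0 nonempty unfolding Reg_def by auto
            have "wmono [V v] - GS = gap E1 s v" unfolding GS_def gap_def using True by (simp add: fsub_eq fsum_eq)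
            then show ?thesis using tgt_gap[OF fa pm pe Bn vY] Bc2 by simp
          next
            case False
            have "\<exists>g. g \<in> {e \<in> E1. s e = v} \<and> g \<notin> F"
            proof (rule ccontr)
              assume "\<not> (\<exists>g. g \<in> {e \<in> E1. s e = v} \<and> g \<notin> F)"
              then have sub: "{e \<in> E1. s e = v} \<subseteq> F" by blast
              then have "finite {e \<in> E1. s e = v}" using finF by (rule finite_subset)
              moreover have "S = {e \<in> E1. s e = v}" using sub SS SF by blast
              ultimately show False using False by blast
            qed
            then obtain g where g: "g \<in> E1" "s g = v" "g \<notin> F" by blast
            have g1: "s g = rpath \<mu>" "s g = rpath \<eta>" using g vw v_def by auto
            note X = Bext2[OF pm pe g(1) g1(1) g(1) g1(2)]
            have "cg (B a (ext \<mu> g) (ext \<eta> g)) (lmul [Gh g] (rmul (B a \<mu> \<eta>) [Ed g]))" by (rule X(3))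
            also have "cg (lmul [Gh g] (rmul (B a \<mu> \<eta>) [Ed g])) (lmul [Gh g] (rmul (smul c (wmono [V v] - GS)) [Ed g]))"
              using Bc2 g by (intro cg_lmul cg_rmul) auto
            also have "lmul [Gh g] (rmul (smul c (wmono [V v] - GS)) [Ed g])
                = smul c (wmono [Gh g, V v, Ed g] - sum (\<lambda>e. wmono [Gh g, Ed e, Gh e, Ed g]) S)"
              unfolding GS_def by (simp add: lmul_smul rmul_smul lmul_diff rmul_diff lmul_sum rmul_sum lmul_wmono rmul_wmono)
            also have "cg (smul c (wmono [Gh g, V v, Ed g] - sum (\<lambda>e. wmono [Gh g, Ed e, Gh e, Ed g]) S))
                          (smul c (wmono [V (r g)] - sum (\<lambda>e. 0) S))"
            proof (intro cg_smul cg_diff cg_sum)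
              have "cg (wmono [Gh g, V v, Ed g]) (wmono [Gh g, Ed g] :: _ \<Rightarrow> 'k)"
                using R_gs[where p = "[]" and q = "[Ed g]" and e = g] g by auto
              also have "cg (wmono [Gh g, Ed g]) (wmono [V (r g)] :: _ \<Rightarrow> 'k)"
                using R_gee[where p = "[]" and q = "[]" and e = g] g by auto
              finally show "cg (wmono [Gh g, V v, Ed g]) (wmono [V (r g)] :: _ \<Rightarrow> 'k)" .
            next
              fix e assume "e \<in> S"
              then have "e \<in> E1" "g \<noteq> e" using SS SF g by auto
              then show "cg (wmono [Gh g, Ed e, Gh e, Ed g]) (0 :: _ \<Rightarrow> 'k)"
                using R_gef[where p = "[]" and q = "[Gh e, Ed g]" and e = g and f = e] g by auto
            qed
            finally have cB: "cg (B a (ext \<mu> g) (ext \<eta> g)) (smul c (wmono [V (r g)]))" by simp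
            have "smul c (wmono [V (r g)]) \<notin> II"
              using smul_notin[OF vertex_notin cn] g by auto
            then have Bnn: "B a (ext \<mu> g) (ext \<eta> g) \<notin> II" using cg_notI[OF cg_sym[OF cB]] by blast
            have rg: "r g \<in> E0" using g(1) by simp
            show ?thesis using tgt_u[OF fa X(1) X(2) Bnn rg cB] .
          qed
        qed
      qed
    qed
  qed
qed

end
end

lemma ev_Nil[simp]: "ev [] = 0" by (simp add: ev_def)
lemma ev_append: "ev (P @ Q) = ev P + ev Q"
  by (induction P) (auto simp: ev_def simp del: plus_fun_apply)
lemma ev_scale: "ev (map (\<lambda>(k, t). (c * k, t)) P) = smul c (ev P)"
proof (induction P)
  case Nil show ?case by (simp add: ev_def smul_def zero_fun_def)
next
  case (Cons a P) then show ?case by (cases a) (auto simp: ev_def smul_add smul_smul simp del: plus_fun_apply)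
qed

context cohn begin

context
  fixes a :: "('v,'e) gen list \<Rightarrow> 'k::field"
  assumes fa: "finite {w. a w \<noteq> 0}" "\<And>w. a w \<noteq> 0 \<Longrightarrow> set w \<subseteq> GG"
begin

lemma main_ind: "msr P \<le> m \<Longrightarrow> is_path E0 E1 r s \<mu> \<Longrightarrow> is_path E0 E1 r s \<eta> \<Longrightarrow> validP P \<Longrightarrow> homP n P
   \<Longrightarrow> B a \<mu> \<eta> \<notin> II \<Longrightarrow> cg (B a \<mu> \<eta>) (ev P) \<Longrightarrow> GOAL a"
proof (induction m arbitrary: \<mu> \<eta> P n rule: less_induct)
  case (less m)
  note pm = less.prems(2) and pe = less.prems(3) and vP = less.prems(4) and hP = less.prems(5)
    and Bn = less.prems(6) and Bc = less.prems(7)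
  define v where "v = rpath \<mu>"
  define w where "w = rpath \<eta>"
  have vE: "v \<in> E0" "w \<in> E0" using rpath_E0 pm pe v_def w_def by auto
  define P0 where "P0 = locP v w P"
  note props = locP_props[OF vP hP, where v = v and w = w, folded P0_def]
  have Bc0: "cg (B a \<mu> \<eta>) (ev P0)"
  proof -
    have "cg (B a \<mu> \<eta>) (lmul [V v] (rmul (B a \<mu> \<eta>) [V w]))"
      unfolding v_def w_def by (rule B_loc[OF fa pm pe])
    also have "cg (lmul [V v] (rmul (B a \<mu> \<eta>) [V w])) (lmul [V v] (rmul (ev P) [V w]))"
      using Bc vE by (intro cg_lmul cg_rmul) auto
    also have "cg (lmul [V v] (rmul (ev P) [V w])) (ev P0)"
      unfolding P0_def by (rule locP_cg[OF vP vE])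
    finally show ?thesis .
  qed
  have ne: "P0 \<noteq> []"
  proof
    assume "P0 = []"
    then have "B a \<mu> \<eta> \<in> II" using Bc0 by (simp add: cg_def)
    then show False using Bn by simp
  qed
  have IH0: "GOAL a" if "msr P' < msr P0" "is_path E0 E1 r s \<mu>'" "is_path E0 E1 r s \<eta>'"
      "validP P'" "homP n' P'" "B a \<mu>' \<eta>' \<notin> II" "cg (B a \<mu>' \<eta>') (ev P')" for \<mu>' \<eta>' P' n'
  proof -
    have "msr P' < m" using that(1) props(3) less.prems(1) by linarith
    then show ?thesis using less.IH[OF _ order.refl that(2-7)] by blast
  qed
  have loc: "\<And>k t. (k, t) \<in> set P0 \<Longrightarrow> isloc (rpath \<mu>) (rpath \<eta>) t" using props(4) v_def w_def by blast
  show ?case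
  proof (cases "\<forall>k u as bs. (k, (u, as, bs)) \<in> set P0 \<longrightarrow> as \<noteq> []")
    case True
    show ?thesis by (rule case_A[OF fa IH0 pm pe props(1) props(2) Bn Bc0 loc ne]) (use True in blast)+
  next
    case F1: False
    then obtain k1 u1 bs1 where t1: "(k1, (u1, [], bs1)) \<in> set P0" by blast
    show ?thesis
    proof (cases "\<forall>k u as bs. (k, (u, as, bs)) \<in> set P0 \<longrightarrow> bs \<noteq> []")
      case True
      show ?thesis by (rule case_B[OF fa IH0 pm pe props(1) props(2) Bn Bc0 loc ne]) (use True in blast)+
    next
      case False
      then obtain k2 u2 as2 where t2: "(k2, (u2, as2, [])) \<in> set P0" by blast
      show ?thesis by (rule case_C[OF fa IH0 pm pe props(1) props(2) Bn Bc0 loc t1 t2]) blast+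
    qed
  qed
qed

end

fun tg :: "('v,'e) gen \<Rightarrow> ('v,'e) tri" where
  "tg (V x) = (x, [], [])" | "tg (Ed e) = (r e, [e], [])" | "tg (Gh e) = (r e, [], [e])"

lemma word_poly: "w \<noteq> [] \<Longrightarrow> set w \<subseteq> GG \<Longrightarrow>
  \<exists>P. validP P \<and> homP (wdeg w) P \<and> cg (wmono w) (ev P :: _ \<Rightarrow> 'k::field)"
proof (induction w)
  case Nil then show ?case by simp
next
  case (Cons g w)
  show ?case
  proof (cases "w = []")
    case True
    have "validP [((1::'k), tg g)]" using Cons.prems by (cases g) (auto simp: validP_def valid.simps)
    moreover have "homP (wdeg [g]) [((1::'k), tg g)]" by (cases g) (auto simp: homP_def degt_def wdeg_def)
    moreover have "ev [((1::'k), tg g)] = wmono [g]" by (cases g) (auto simp: ev_def)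
    ultimately show ?thesis using True by (intro exI[of _ "[((1::'k), tg g)]"]) auto
  next
    case False
    then obtain P where P: "validP P" "homP (wdeg w) P" "cg (wmono w) (ev P :: _ \<Rightarrow> 'k)" using Cons by auto
    have g: "g \<in> GG" using Cons.prems by auto
    have "cg (wmono (g # w)) (lmul [g] (ev P) :: _ \<Rightarrow> 'k)"
      using cg_lmul[OF P(3), of "[g]"] g by (simp add: lmul_wmono)
    also have "cg (lmul [g] (ev P)) (ev (lift (Lt g) P))" by (rule ev_lift_cg_L[OF P(1) g])
    finally have "cg (wmono (g # w)) (ev (lift (Lt g) P))" .
    moreover have "validP (lift (Lt g) P)" by (rule validP_Lt[OF P(1) g])
    moreover have "homP (wdeg (g # w)) (lift (Lt g) P)"
      using homP_Lt[OF P(2), of g] by (simp add: wdeg_def add.commute)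
    ultimately show ?thesis by blast
  qed
qed

lemma sum_poly: "finite A \<Longrightarrow> (\<And>w. w \<in> A \<Longrightarrow> w \<noteq> [] \<and> set w \<subseteq> GG \<and> wdeg w = n) \<Longrightarrow>
  \<exists>P. validP P \<and> homP n P \<and> cg (sum (\<lambda>w. smul (c w) (wmono w)) A) (ev P :: _ \<Rightarrow> 'k::field)"
proof (induction A rule: finite_induct)
  case empty
  then show ?case by (intro exI[of _ "[]"]) (auto simp: validP_def homP_def)
next
  case (insert x A)
  then obtain P where P: "validP P" "homP n P" "cg (sum (\<lambda>w. smul (c w) (wmono w)) A) (ev P :: _ \<Rightarrow> 'k)" by auto
  obtain Q where Q: "validP Q" "homP (wdeg x) Q" "cg (wmono x) (ev Q :: _ \<Rightarrow> 'k)"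
    using word_poly insert.prems by blast
  define R where "R = map (\<lambda>(k, t). (c x * k, t)) Q @ P"
  have "validP R" using P(1) Q(1) unfolding R_def validP_def by auto
  moreover have "homP n R" using P(2) Q(2) insert.prems unfolding R_def homP_def by auto
  moreover have "cg (sum (\<lambda>w. smul (c w) (wmono w)) (insert x A)) (ev R)"
    using insert.hyps cg_add[OF cg_smul[OF Q(3), of "c x"] P(3)]
    by (simp add: R_def ev_append ev_scale del: plus_fun_apply)
  ultimately show ?case by blast
qed

definition sa :: "('v,'e) tri \<Rightarrow> 'v" where "sa t = (case t of (u, as, bs) \<Rightarrow> start as u)"
definition sb :: "('v,'e) tri \<Rightarrow> 'v" where "sb t = (case t of (u, as, bs) \<Rightarrow> start bs u)"

lemma locP_lift: "locP v w P = lift (\<lambda>t. if v = sa t \<and> w = sb t then Some t else None) P"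
  unfolding locP_def lift_lift
  by (rule arg_cong[where f = "\<lambda>f. lift f P"]) (auto simp: fun_eq_iff sa_def sb_def split: prod.splits)

lemma sab_E0: "valid t \<Longrightarrow> sa t \<in> E0 \<and> sb t \<in> E0"
proof (cases t)
  case (fields u as bs)
  assume v: "valid t"
  then have "u \<in> E0" "set as \<subseteq> E1" "set bs \<subseteq> E1" using fields by (auto simp: valid.simps)
  then show ?thesis using fields by (cases as; cases bs) (auto simp: sa_def sb_def)
qed

lemma part1: fixes a :: "('v,'e) gen list \<Rightarrow> 'k::field" assumes fe: "free_elem GG a" and hg: "homog n a" and an: "a \<notin> II"
  shows "GOAL a"
proof -
  have fa: "finite {w. a w \<noteq> 0}" "\<And>w. a w \<noteq> 0 \<Longrightarrow> set w \<subseteq> GG"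
    using fe unfolding free_elem_def by auto
  have wp: "\<And>w. w \<in> {w. a w \<noteq> 0} \<Longrightarrow> w \<noteq> [] \<and> set w \<subseteq> GG \<and> wdeg w = n"
    using fe hg unfolding free_elem_def homog_def by blast
  obtain P where P: "validP P" "homP n P" "cg (sum (\<lambda>w. smul (a w) (wmono w)) {w. a w \<noteq> 0}) (ev P :: _ \<Rightarrow> 'k)"
    using sum_poly[OF fa(1) wp, of a] by blast
  have aeq: "sum (\<lambda>w. smul (a w) (wmono w)) {w. a w \<noteq> 0} = a" by (rule supp_decomp[OF fa(1), symmetric])
  have aP: "cg a (ev P)" using P(3) unfolding aeq .
  define A where "A = sa ` snd ` set P \<union> sb ` snd ` set P"
  have finA: "finite A" unfolding A_def by simp
  have AE: "A \<subseteq> E0"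
  proof
    fix x assume "x \<in> A"
    then obtain y where y: "y \<in> set P" "x = sa (snd y) \<or> x = sb (snd y)" unfolding A_def by blast
    have "valid (snd y)" using validP_D[OF P(1), of "fst y" "snd y"] y(1) by simp
    then show "x \<in> E0" using y(2) sab_E0 by blast
  qed
  have dec: "ev P = sum (\<lambda>v. sum (\<lambda>w. ev (locP v w P)) A) A"
  proof -
    have "sum (\<lambda>v. sum (\<lambda>w. ev (locP v w P)) A) A
        = sum (\<lambda>v. sum (\<lambda>w. evh (\<lambda>t. evo (if v = sa t \<and> w = sb t then Some t else None)) P) A) A"
      by (simp only: locP_lift ev_lift)
    also have "\<dots> = sum (\<lambda>v. evh (\<lambda>t. sum (\<lambda>w. evo (if v = sa t \<and> w = sb t then Some t else None)) A) P) A"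
      by (simp only: evh_sum)
    also have "\<dots> = evh (\<lambda>t. sum (\<lambda>v. sum (\<lambda>w. evo (if v = sa t \<and> w = sb t then Some t else None)) A) A) P"
      by (simp only: evh_sum)
    also have "\<dots> = evh (\<lambda>t. wmono (nw t)) P"
    proof (rule evh_cong)
      fix k t assume kt: "(k, t) \<in> set P"
      have "sa t \<in> A" "sb t \<in> A" unfolding A_def using kt by force+
      then show "sum (\<lambda>v. sum (\<lambda>w. evo (if v = sa t \<and> w = sb t then Some t else None)) A) A = wmono (nw t)"
        by (rule sum_sum_delta[OF finA])
    qed
    finally show ?thesis by (simp add: ev_def)
  qed
  have "\<exists>v\<in>A. \<exists>w\<in>A. lmul [V v] (rmul a [V w]) \<notin> II"
  proof (rule ccontr)
    assume "\<not> (\<exists>v\<in>A. \<exists>w\<in>A. lmul [V v] (rmul a [V w]) \<notin> II)"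
    then have all: "lmul [V v] (rmul a [V w]) \<in> II" if "v \<in> A" "w \<in> A" for v w using that by blast
    have "ev (locP v w P) \<in> II" if vw: "v \<in> A" "w \<in> A" for v w
    proof -
      have vE: "v \<in> E0" "w \<in> E0" using vw AE by auto
      have "cg (ev (locP v w P)) (lmul [V v] (rmul (ev P) [V w]))" by (rule cg_sym[OF locP_cg[OF P(1) vE]])
      also have "cg (lmul [V v] (rmul (ev P) [V w])) (lmul [V v] (rmul a [V w]))"
        using vE by (intro cg_lmul cg_rmul cg_sym[OF aP]) auto
      finally show ?thesis using all[OF vw] cg_in by blast
    qed
    then have "ev P \<in> II" unfolding dec using finA by (intro I_sum) auto
    then show False using cg_in[OF aP] an by blast
  qed
  then obtain v w where vw: "v \<in> A" "w \<in> A" and nI: "lmul [V v] (rmul a [V w]) \<notin> II" by blast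
  have vE: "v \<in> E0" "w \<in> E0" using vw AE by auto
  have Beq: "B a (Inl v) (Inl w) = lmul [V v] (rmul a [V w])"
    by (simp add: B_alt[OF fa] lmul_rmul)
  have Bc: "cg (B a (Inl v) (Inl w)) (ev (locP v w P))"
  proof -
    have "cg (lmul [V v] (rmul a [V w])) (lmul [V v] (rmul (ev P) [V w]))"
      using vE by (intro cg_lmul cg_rmul aP) auto
    also have "cg (lmul [V v] (rmul (ev P) [V w])) (ev (locP v w P))" by (rule locP_cg[OF P(1) vE])
    finally show ?thesis using Beq by simp
  qed
  note props = locP_props[OF P(1) P(2), where v = v and w = w]
  show ?thesis
    by (rule main_ind[OF fa order.refl _ _ props(1) props(2) _ Bc]) (use vE nI Beq in auto)
qed

end

lemma free_wmono: "w \<noteq> [] \<Longrightarrow> set w \<subseteq> G \<Longrightarrow> free_elem G (wmono w :: _ \<Rightarrow> 'k::field)"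
  unfolding free_elem_def by (rule conjI, rule finite_subset[of _ "{w}"]) (auto simp: wmono_def)

lemma hcomp_decomp: "finite {w. a w \<noteq> 0} \<Longrightarrow> a = sum (\<lambda>n. hcomp n a) (wdeg ` {w. a w \<noteq> (0::'k::field)})"
proof
  fix w assume f: "finite {w. a w \<noteq> 0}"
  have "sum (\<lambda>n. hcomp n a) (wdeg ` {w. a w \<noteq> 0}) w = (\<Sum>n\<in>wdeg ` {w. a w \<noteq> 0}. if wdeg w = n then a w else 0)"
    by (simp add: sum_fun_apply hcomp_def)
  also have "\<dots> = a w" using f by (auto simp: sum.delta')
  finally show "a w = sum (\<lambda>n. hcomp n a) (wdeg ` {w. a w \<noteq> 0}) w" by simp
qed

theorem mainTheorem3:
  fixes E0 :: "'v set" and E1 :: "'e set" and r s :: "'e \<Rightarrow> 'v" and X :: "'v set"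
  assumes graph: "is_graph E0 E1 r s"
    and XReg: "X \<subseteq> Reg E0 E1 s"
  defines "Y \<equiv> Reg E0 E1 s - X"
    and "I \<equiv> (cohn_ideal E0 E1 r s X :: (('v, 'e) gen list \<Rightarrow> 'k::field) set)"
  shows
    "(\<forall>(a :: ('v, 'e) gen list \<Rightarrow> 'k) n.
        free_elem (gens E0 E1) a \<and> homog n a \<and> a \<notin> I \<longrightarrow>
        (\<exists>\<mu> \<eta>. is_path E0 E1 r s \<mu> \<and> is_path E0 E1 r s \<eta> \<and>
           (let b = fmul (fmul (pth_star \<mu>) a) (pth \<eta>) in
              b \<notin> I \<and>
              (\<exists>k. k \<noteq> 0 \<and>
                 ((\<exists>u\<in>E0. fsub b (smul k (wmono [V u])) \<in> I) \<or>
                  (\<exists>v\<in>Y. fsub b (smul k (gap E1 s v)) \<in> I))))))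
     \<and>
     (\<forall>J :: (('v, 'e) gen list \<Rightarrow> 'k) set.
        alg_ideal (gens E0 E1) J \<and> I \<subseteq> J \<and> \<not> J \<subseteq> I \<and>
        (\<forall>a\<in>J. \<forall>n. hcomp n a \<in> J) \<longrightarrow>
        (\<exists>u\<in>E0. wmono [V u] \<in> J) \<or> (\<exists>v\<in>Y. gap E1 s v \<in> J))"
proof -
  interpret cohn E0 E1 r s X by (rule cohn.intro[OF graph XReg])
  have IE: "I = II" unfolding I_def II_def ..
  have P1: "cohn.GOAL E0 E1 r s X a" if "free_elem (gens E0 E1) a" "homog n a" "a \<notin> I"
    for a :: "('v, 'e) gen list \<Rightarrow> 'k" and n
  proof -
    have "a \<notin> II" using that(3) unfolding IE .
    then show ?thesis by (rule part1[OF that(1) that(2)])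
  qed
  show ?thesis
  proof (intro conjI allI impI)
    fix a :: "('v, 'e) gen list \<Rightarrow> 'k" and n
    assume h: "free_elem (gens E0 E1) a \<and> homog n a \<and> a \<notin> I"
    then have "GOAL a" using P1[of a n] by simp
    then show "\<exists>\<mu> \<eta>. is_path E0 E1 r s \<mu> \<and> is_path E0 E1 r s \<eta> \<and>
           (let b = fmul (fmul (pth_star \<mu>) a) (pth \<eta>) in
              b \<notin> I \<and>
              (\<exists>k. k \<noteq> 0 \<and>
                 ((\<exists>u\<in>E0. fsub b (smul k (wmono [V u])) \<in> I) \<or>
                  (\<exists>v\<in>Y. fsub b (smul k (gap E1 s v)) \<in> I))))"
      unfolding GOAL_def Y_def IE .
  next
    fix J :: "(('v, 'e) gen list \<Rightarrow> 'k) set"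
    assume h: "alg_ideal (gens E0 E1) J \<and> I \<subseteq> J \<and> \<not> J \<subseteq> I \<and> (\<forall>a\<in>J. \<forall>n. hcomp n a \<in> J)"
    have AJ: "J \<subseteq> {f. free_elem (gens E0 E1) f}" "\<And>a b. a \<in> J \<Longrightarrow> b \<in> J \<Longrightarrow> fadd a b \<in> J"
      "\<And>a k. a \<in> J \<Longrightarrow> smul k a \<in> J"
      "\<And>a x. a \<in> J \<Longrightarrow> free_elem (gens E0 E1) x \<Longrightarrow> fmul x a \<in> J \<and> fmul a x \<in> J"
      using h unfolding alg_ideal_def by blast+
    obtain a where aJ: "a \<in> J" and aI: "a \<notin> I" using h by blast
    have fe: "free_elem (gens E0 E1) a" using AJ(1) aJ by blast
    have fa: "finite {w. a w \<noteq> 0}" using fe unfolding free_elem_def by blast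
    define D where "D = wdeg ` {w. a w \<noteq> 0}"
    have "\<exists>n\<in>D. hcomp n a \<notin> I"
    proof (rule ccontr)
      assume "\<not> (\<exists>n\<in>D. hcomp n a \<notin> I)"
      then have "sum (\<lambda>n. hcomp n a) D \<in> II" using fa unfolding D_def IE by (intro I_sum) auto
      then show False using aI hcomp_decomp[OF fa] unfolding D_def IE by simp
    qed
    then obtain n where nI: "hcomp n a \<notin> I" by blast
    have hJ: "hcomp n a \<in> J" using h aJ by blast
    have feh: "free_elem (gens E0 E1) (hcomp n a)"
      using fe unfolding free_elem_def hcomp_def by (auto intro: finite_subset[OF _ fa])
    have hh: "homog n (hcomp n a)" unfolding homog_def hcomp_def by auto
    have "GOAL (hcomp n a)" using P1[OF feh hh nI] .
    then obtain \<mu> \<eta> k where pm: "is_path E0 E1 r s \<mu>" and pe: "is_path E0 E1 r s \<eta>"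
      and bI: "fmul (fmul (pth_star \<mu>) (hcomp n a)) (pth \<eta>) \<notin> II" and k: "k \<noteq> 0"
      and tg: "(\<exists>u\<in>E0. fsub (fmul (fmul (pth_star \<mu>) (hcomp n a)) (pth \<eta>)) (smul k (wmono [V u])) \<in> II) \<or>
               (\<exists>v\<in>Reg E0 E1 s - X. fsub (fmul (fmul (pth_star \<mu>) (hcomp n a)) (pth \<eta>)) (smul k (gap E1 s v)) \<in> II)"
      unfolding GOAL_def Let_def by blast
    define b where "b = fmul (fmul (pth_star \<mu>) (hcomp n a)) (pth \<eta>)"
    have fs: "free_elem (gens E0 E1) (pth_star \<mu>)" "free_elem (gens E0 E1) (pth \<eta>)"
    proof -
      show "free_elem (gens E0 E1) (pth_star \<mu>)" unfolding pth_star_ws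
        by (rule free_wmono) (use pm in \<open>cases \<mu>; auto\<close>, rule ws_GG[OF pm])
      show "free_elem (gens E0 E1) (pth \<eta>)" unfolding pth_wp
        by (rule free_wmono) (use pe in \<open>cases \<eta>; auto\<close>, rule wp_GG[OF pe])
    qed
    have bJ: "b \<in> J" unfolding b_def using AJ(4)[OF AJ(4)[OF hJ fs(1), THEN conjunct1] fs(2)] by blast
    have tJ: "t \<in> J" if "fsub b (smul k t) \<in> II" for t
    proof -
      have dJ: "fsub b (smul k t) \<in> J" using that h IE by blast
      have "fadd b (smul (-1) (fsub b (smul k t))) = smul k t"
        by (auto simp: fun_eq_iff fadd_def smul_def fsub_def)
      then have "smul k t \<in> J" using AJ(2)[OF bJ AJ(3)[OF dJ, of "-1"]] by simp
      then have "smul (inverse k) (smul k t) \<in> J" using AJ(3) by blast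
      then show ?thesis using k by (simp add: smul_smul)
    qed
    show "(\<exists>u\<in>E0. wmono [V u] \<in> J) \<or> (\<exists>v\<in>Y. gap E1 s v \<in> J)"
      using tg tJ unfolding b_def Y_def by blast
  qed
qed


end
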